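(* For $g\ge1$ and $k\ge2$, the level-$k$ subgroup $\mathrm{Mod}(S_g)[k]$ is a normal subgroup of $\mathrm{LMod}_{p_k}(S_g)$.
   Context: $S_g$ is the closed orientable surface of genus $g$, $\mathrm{Mod}(S_g)$ its mapping class group. Fix simple closed curves $a_1,b_1,\dots,a_g,b_g$ whose classes form a standard symplectic basis of $H_1(S_g,\mathbb Z)$. $\Psi_k:\mathrm{Mod}(S_g)\to\mathrm{Sp}(2g,\mathbb Z_k)$ is the action on $H_1(S_g,\mathbb Z_k)$, and $\mathrm{Mod}(S_g)[k]=\ker\Psi_k$. $p_k:S_{k(g-1)+1}\to S_g$ is the connected regular $k$-sheeted cover with deck group $\mathbb Z_k$ corresponding to the kernel of the epimorphism $\pi_1(S_g)\to\mathbb Z_k$ sending $b_1\mapsto1$ and $a_1,a_2,b_2,\dots,a_g,b_g\mapsto0$. $\mathrm{LMod}_{p_k}(S_g)$ is the set of mapping classes represented by a homeomorphism of $S_g$ that lifts to a homeomorphism of $S_{k(g-1)+1}$ through $p_k$. *)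

theory Defs
  imports "HOL-Analysis.Analysis" "HOL-Homology.Homology"
begin

text \<open>Orientable: its second integral homology group is infinite
  cyclic (for closed connected surfaces this is equivalent to orientability).\<close>

definition closed_surface :: "'a topology \<Rightarrow> bool" where
  "closed_surface X \<longleftrightarrow> topspace X \<noteq> {} \<and> compact_space X \<and> connected_space X \<and> Hausdorff_space X
     \<and> (\<forall>x\<in>topspace X. \<exists>U. openin X U \<and> x \<in> U \<and>
            subtopology X U homeomorphic_space Euclidean_space 2)"

definition orientable_closed_surface :: "'a topology \<Rightarrow> bool" where
  "orientable_closed_surface X \<longleftrightarrow> closed_surface X \<and> homology_group 2 X \<cong> integer_group"

definition loop_simplex :: "(real \<Rightarrow> 'a) \<Rightarrow> (nat \<Rightarrow> real) \<Rightarrow> 'a" where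
  "loop_simplex \<gamma> = restrict (\<lambda>x. \<gamma> (x 1)) (standard_simplex 1)"

definition loop_class :: "'a topology \<Rightarrow> (real \<Rightarrow> 'a) \<Rightarrow> 'a chain set" where
  "loop_class X \<gamma> = homologous_rel_set 1 X {} (frag_of (loop_simplex \<gamma>))"

definition simple_closed_curve :: "'a topology \<Rightarrow> (real \<Rightarrow> 'a) \<Rightarrow> bool" where
  "simple_closed_curve X \<gamma> \<longleftrightarrow> pathin X \<gamma> \<and> \<gamma> 0 = \<gamma> 1 \<and> inj_on \<gamma> {0..<1}"

definition hcomb :: "'a topology \<Rightarrow> nat \<Rightarrow> (nat \<Rightarrow> real \<Rightarrow> 'a) \<Rightarrow> (nat \<Rightarrow> real \<Rightarrow> 'a)
                     \<Rightarrow> (nat \<Rightarrow> int) \<Rightarrow> (nat \<Rightarrow> int) \<Rightarrow> 'a chain set" where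
  "hcomb X g a b n m =
     finprod (homology_group 1 X)
       (\<lambda>i. (loop_class X (a i) [^]\<^bsub>homology_group 1 X\<^esub> n i)
            \<otimes>\<^bsub>homology_group 1 X\<^esub> (loop_class X (b i) [^]\<^bsub>homology_group 1 X\<^esub> m i)) {1..g}"

definition homology_basis :: "'a topology \<Rightarrow> nat \<Rightarrow> (nat \<Rightarrow> real \<Rightarrow> 'a) \<Rightarrow> (nat \<Rightarrow> real \<Rightarrow> 'a) \<Rightarrow> bool" where
  "homology_basis X g a b \<longleftrightarrow>
     (\<forall>c \<in> carrier (homology_group 1 X).
        \<exists>!nm. nm \<in> ({1..g} \<rightarrow>\<^sub>E UNIV) \<times> ({1..g} \<rightarrow>\<^sub>E UNIV) \<and> c = hcomb X g a b (fst nm) (snd nm))"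

text \<open>The homomorphism H_1(S_g;Z) -> Z_k with b_1 -> 1 and all other basis classes -> 0
  (through which pi_1 -> Z_k factors): its kernel, i.e. classes whose b_1-coefficient is
  divisible by k.\<close>

definition in_ker_phi :: "'a topology \<Rightarrow> nat \<Rightarrow> (nat \<Rightarrow> real \<Rightarrow> 'a) \<Rightarrow> (nat \<Rightarrow> real \<Rightarrow> 'a)
                           \<Rightarrow> nat \<Rightarrow> 'a chain set \<Rightarrow> bool" where
  "in_ker_phi X g a b k c \<longleftrightarrow>
     (\<exists>n m. n \<in> {1..g} \<rightarrow>\<^sub>E UNIV \<and> m \<in> {1..g} \<rightarrow>\<^sub>E UNIV \<and> c = hcomb X g a b n m
            \<and> int k dvd m 1)"

definition covering_map :: "'b topology \<Rightarrow> 'a topology \<Rightarrow> ('b \<Rightarrow> 'a) \<Rightarrow> bool" where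
  "covering_map Y X p \<longleftrightarrow> continuous_map Y X p \<and> p ` topspace Y = topspace X \<and>
     (\<forall>x \<in> topspace X. \<exists>U. openin X U \<and> x \<in> U \<and>
        (\<exists>\<V>. \<Union>\<V> = {y \<in> topspace Y. p y \<in> U} \<and> pairwise disjnt \<V> \<and>
             (\<forall>V \<in> \<V>. openin Y V \<and> homeomorphic_map (subtopology Y V) (subtopology X U) p)))"

text \<open>The regular cover p : Y -> X corresponding to the kernel of pi_1(X) -> Z_k
  (b_1 -> 1, others -> 0): a connected covering in which a loop of X lifts to a closed
  loop (from any starting point over its base point) iff its class lies in the kernel.\<close>

definition cover_of_ker_phi :: "'b topology \<Rightarrow> 'a topology \<Rightarrow> ('b \<Rightarrow> 'a) \<Rightarrow> nat
                                \<Rightarrow> (nat \<Rightarrow> real \<Rightarrow> 'a) \<Rightarrow> (nat \<Rightarrow> real \<Rightarrow> 'a) \<Rightarrow> nat \<Rightarrow> bool" where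
  "cover_of_ker_phi Y X p g a b k \<longleftrightarrow> covering_map Y X p \<and> connected_space Y \<and>
     (\<forall>\<gamma> y. pathin X \<gamma> \<and> \<gamma> 0 = \<gamma> 1 \<and> y \<in> topspace Y \<and> p y = \<gamma> 0 \<longrightarrow>
        ((\<exists>\<delta>. pathin Y \<delta> \<and> \<delta> 0 = y \<and> \<delta> 1 = y \<and> (\<forall>t\<in>{0..1}. p (\<delta> t) = \<gamma> t))
          \<longleftrightarrow> in_ker_phi X g a b k (loop_class X \<gamma>)))"

definition orient_pres_homeos :: "'a topology \<Rightarrow> ('a \<Rightarrow> 'a) set" where
  "orient_pres_homeos X = {f. homeomorphic_map X X f \<and> f \<in> extensional (topspace X) \<and>
      (\<forall>c \<in> carrier (homology_group 2 X). hom_induced 2 X {} X {} f c = c)}"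

definition isotopic :: "'a topology \<Rightarrow> ('a \<Rightarrow> 'a) \<Rightarrow> ('a \<Rightarrow> 'a) \<Rightarrow> bool" where
  "isotopic X f h \<longleftrightarrow> (\<exists>H. continuous_map (prod_topology (top_of_set {0..1::real}) X) X H \<and>
      (\<forall>x\<in>topspace X. H (0, x) = f x \<and> H (1, x) = h x) \<and>
      (\<forall>t\<in>{0..1}. homeomorphic_map X X (\<lambda>x. H (t, x))))"

definition mclass :: "'a topology \<Rightarrow> ('a \<Rightarrow> 'a) \<Rightarrow> ('a \<Rightarrow> 'a) set" where
  "mclass X f = {h \<in> orient_pres_homeos X. isotopic X f h}"

definition MCG :: "'a topology \<Rightarrow> ('a \<Rightarrow> 'a) set monoid" where
  "MCG X = \<lparr>carrier = mclass X ` orient_pres_homeos X,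
            monoid.mult = (\<lambda>A B. mclass X (compose (topspace X) (SOME f. f \<in> A) (SOME h. h \<in> B))),
            one = mclass X (restrict id (topspace X))\<rparr>"

text \<open>Level-k subgroup: kernel of the action on H_1(X;Z_k) = H_1(X;Z)/k H_1(X;Z)
  (universal coefficients; H_0 is free).\<close>

definition acts_trivially_mod :: "'a topology \<Rightarrow> nat \<Rightarrow> ('a \<Rightarrow> 'a) \<Rightarrow> bool" where
  "acts_trivially_mod X k f \<longleftrightarrow>
     (\<forall>c \<in> carrier (homology_group 1 X). \<exists>d \<in> carrier (homology_group 1 X).
        hom_induced 1 X {} X {} f c = c \<otimes>\<^bsub>homology_group 1 X\<^esub> (d [^]\<^bsub>homology_group 1 X\<^esub> k))"

definition level_subgroup :: "'a topology \<Rightarrow> nat \<Rightarrow> ('a \<Rightarrow> 'a) set set" where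
  "level_subgroup X k = {C \<in> carrier (MCG X). \<exists>f\<in>C. acts_trivially_mod X k f}"

definition lifts_to_homeo :: "'b topology \<Rightarrow> 'a topology \<Rightarrow> ('b \<Rightarrow> 'a) \<Rightarrow> ('a \<Rightarrow> 'a) \<Rightarrow> bool" where
  "lifts_to_homeo Y X p f \<longleftrightarrow>
     (\<exists>h. homeomorphic_map Y Y h \<and> (\<forall>y\<in>topspace Y. p (h y) = f (p y)))"

definition LMod :: "'b topology \<Rightarrow> 'a topology \<Rightarrow> ('b \<Rightarrow> 'a) \<Rightarrow> ('a \<Rightarrow> 'a) set set" where
  "LMod Y X p = {C \<in> carrier (MCG X). \<exists>f\<in>C. lifts_to_homeo Y X p f}"

end

theory Submission
  imports Defs
begin
lemma cov_map_cont: "covering_map Y X p \<Longrightarrow> continuous_map Y X p"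
  by (simp add: covering_map_def)

lemma cov_map_in: "covering_map Y X p \<Longrightarrow> y \<in> topspace Y \<Longrightarrow> p y \<in> topspace X"
  using cov_map_cont continuous_map_image_subset_topspace by blast

lemma cov_local:
  assumes "covering_map Y X p" "y \<in> topspace Y"
  shows "\<exists>U V \<V>. openin X U \<and> p y \<in> U \<and> \<Union>\<V> = {z \<in> topspace Y. p z \<in> U} \<and> pairwise disjnt \<V>
     \<and> (\<forall>V\<in>\<V>. openin Y V \<and> homeomorphic_map (subtopology Y V) (subtopology X U) p) \<and> V \<in> \<V> \<and> y \<in> V"
proof -
  have py: "p y \<in> topspace X" using assms by (rule cov_map_in)
  have H: "\<forall>x \<in> topspace X. \<exists>U. openin X U \<and> x \<in> U \<and>
        (\<exists>\<V>. \<Union>\<V> = {y \<in> topspace Y. p y \<in> U} \<and> pairwise disjnt \<V> \<and>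
             (\<forall>V \<in> \<V>. openin Y V \<and> homeomorphic_map (subtopology Y V) (subtopology X U) p))"
    using assms(1) unfolding covering_map_def by (elim conjE)
  obtain U \<V> where U: "openin X U" "p y \<in> U" and V: "\<Union>\<V> = {y \<in> topspace Y. p y \<in> U}" "pairwise disjnt \<V>"
       "\<forall>V \<in> \<V>. openin Y V \<and> homeomorphic_map (subtopology Y V) (subtopology X U) p"
    using bspec[OF H py] by (elim exE conjE) (rule that; assumption)
  have "y \<in> \<Union>\<V>" using assms(2) U(2) unfolding V(1) by simp
  then obtain V where "V \<in> \<V>" "y \<in> V" by (elim UnionE)
  then show ?thesis using U V by (intro exI[of _ U] exI[of _ V] exI[of _ \<V>]) simp
qed

lemma cov_localE:
  assumes "covering_map Y X p" "y \<in> topspace Y"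
  obtains U V \<V> where "openin X U" "p y \<in> U" "\<Union>\<V> = {z \<in> topspace Y. p z \<in> U}" "pairwise disjnt \<V>"
     "\<forall>V\<in>\<V>. openin Y V \<and> homeomorphic_map (subtopology Y V) (subtopology X U) p" "V \<in> \<V>" "y \<in> V"
  using cov_local[OF assms] by (elim exE conjE) (rule that; assumption)

lemma sheet_inverse:
  assumes "homeomorphic_map (subtopology Y V) (subtopology X U) p" "openin Y V" "openin X U"
  shows "\<exists>s. continuous_map (subtopology X U) Y s \<and> (\<forall>x\<in>U. s x \<in> V \<and> p (s x) = x) \<and> (\<forall>y\<in>V. s (p y) = y)
          \<and> p ` V = U \<and> inj_on p V \<and> continuous_map (subtopology Y V) X p"
proof -
  obtain s where s: "homeomorphic_maps (subtopology Y V) (subtopology X U) p s"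
    using assms(1) homeomorphic_map_maps by blast
  have tV: "topspace (subtopology Y V) = V" and tU: "topspace (subtopology X U) = U"
    using assms(2,3) openin_subset by (auto simp: topspace_subtopology)
  have c1: "continuous_map (subtopology X U) (subtopology Y V) s" 
    and c2: "continuous_map (subtopology Y V) (subtopology X U) p"
    and e1: "\<forall>y\<in>V. s (p y) = y" and e2: "\<forall>x\<in>U. p (s x) = x"
    using s tV tU by (auto simp: homeomorphic_maps_def)
  have "\<forall>x\<in>U. s x \<in> V" using c1 tV tU unfolding continuous_map_def by blast
  moreover have "p ` V = U" using assms(1) tV tU homeomorphic_imp_surjective_map by metis
  moreover have "inj_on p V" using assms(1) tV homeomorphic_imp_injective_map by metis
  ultimately show ?thesis using c1 c2 e1 e2
    by (metis continuous_map_in_subtopology)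
qed

lemma II_conn: "connected_space (subtopology euclideanreal {0..1::real})"
  by (simp add: connected_space_iff_is_interval_1 is_interval_cc)

lemma lift_unique:
  assumes cov: "covering_map Y X p" and d1: "pathin Y d1" and d2: "pathin Y d2"
    and eq: "\<forall>t\<in>{0..1}. p (d1 t) = p (d2 t)" and st: "d1 0 = d2 0"
  shows "\<forall>t\<in>{0..1}. d1 t = d2 t"
proof -
  let ?I = "subtopology euclideanreal {0..1::real}"
  have tI: "topspace ?I = {0..1}" by simp
  have c1: "continuous_map ?I Y d1" and c2: "continuous_map ?I Y d2" using d1 d2 by (auto simp: pathin_def)
  define A where "A = {t\<in>{0..1::real}. d1 t = d2 t}"
  have opA: "openin ?I A"
  proof (subst openin_subopen, intro ballI)
    fix t assume "t \<in> A"
    then have t: "t \<in> {0..1}" "d1 t = d2 t" by (auto simp: A_def)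
    have "d1 t \<in> topspace Y" using path_image_subset_topspace[OF d1] t(1) by blast
    then obtain U V \<V> where UV: "openin X U" "p (d1 t) \<in> U" "\<Union>\<V> = {z \<in> topspace Y. p z \<in> U}" "pairwise disjnt \<V>"
     "\<forall>V\<in>\<V>. openin Y V \<and> homeomorphic_map (subtopology Y V) (subtopology X U) p" "V \<in> \<V>" "d1 t \<in> V"
      by (rule cov_localE[OF cov])
    then have oV: "openin Y V" and hV: "homeomorphic_map (subtopology Y V) (subtopology X U) p" by auto
    have inj: "inj_on p V" using sheet_inverse[OF hV oV UV(1)] by blast
    let ?T = "{s \<in> topspace ?I. d1 s \<in> V} \<inter> {s \<in> topspace ?I. d2 s \<in> V}"
    have "openin ?I ?T" using openin_continuous_map_preimage[OF c1 oV] openin_continuous_map_preimage[OF c2 oV] by (rule openin_Int)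
    moreover have "t \<in> ?T" using t UV by auto
    moreover have "?T \<subseteq> A"
    proof
      fix s assume s: "s \<in> ?T"
      then have "p (d1 s) = p (d2 s)" "d1 s \<in> V" "d2 s \<in> V" "s \<in> {0..1}" using eq by auto
      then show "s \<in> A" using inj unfolding A_def inj_on_def by blast
    qed
    ultimately show "\<exists>T. openin ?I T \<and> t \<in> T \<and> T \<subseteq> A" by blast
  qed
  have opB: "openin ?I ({0..1} - A)"
  proof (subst openin_subopen, intro ballI)
    fix t assume "t \<in> {0..1} - A"
    then have t: "t \<in> {0..1}" "d1 t \<noteq> d2 t" by (auto simp: A_def)
    have "d1 t \<in> topspace Y" using path_image_subset_topspace[OF d1] t(1) by blast
    then obtain U V \<V> where UV: "openin X U" "p (d1 t) \<in> U" "\<Union>\<V> = {z \<in> topspace Y. p z \<in> U}" "pairwise disjnt \<V>"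
     "\<forall>V\<in>\<V>. openin Y V \<and> homeomorphic_map (subtopology Y V) (subtopology X U) p" "V \<in> \<V>" "d1 t \<in> V"
      by (rule cov_localE[OF cov])
    have "d2 t \<in> topspace Y" using path_image_subset_topspace[OF d2] t(1) by blast
    moreover have "p (d2 t) \<in> U" using UV(2) eq t(1) by simp
    ultimately have "d2 t \<in> \<Union>\<V>" unfolding UV(3) by simp
    then obtain V2 where V2: "V2 \<in> \<V>" "d2 t \<in> V2" by (elim UnionE)
    have oV: "openin Y V" and hV: "homeomorphic_map (subtopology Y V) (subtopology X U) p" using UV by auto
    have oV2: "openin Y V2" using UV(5) V2 by auto
    have inj: "inj_on p V" using sheet_inverse[OF hV oV UV(1)] by blast
    have "V \<noteq> V2"
    proof
      assume "V = V2"
      then have "d2 t \<in> V" using V2 by simp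
      moreover have "p (d1 t) = p (d2 t)" using eq t(1) by simp
      ultimately have "d1 t = d2 t" using inj UV(7) unfolding inj_on_def by blast
      then show False using t(2) by simp
    qed
    then have disj: "V \<inter> V2 = {}" using UV(4) UV(6) V2(1) unfolding pairwise_def disjnt_def by blast
    let ?T = "{s \<in> topspace ?I. d1 s \<in> V} \<inter> {s \<in> topspace ?I. d2 s \<in> V2}"
    have "openin ?I ?T" using openin_continuous_map_preimage[OF c1 oV] openin_continuous_map_preimage[OF c2 oV2] by (rule openin_Int)
    moreover have "t \<in> ?T" using t UV V2 by auto
    moreover have "?T \<subseteq> {0..1} - A" using disj by (auto simp: A_def)
    ultimately show "\<exists>T. openin ?I T \<and> t \<in> T \<and> T \<subseteq> {0..1} - A" by blast
  qed
  have "A \<subseteq> {0..1}" by (auto simp: A_def)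
  then have clA: "closedin ?I A" unfolding closedin_def tI using opB by simp
  have "A = {} \<or> A = topspace ?I" using II_conn opA clA unfolding connected_space_clopen_in by blast
  moreover have "0 \<in> A" using st by (simp add: A_def)
  ultimately have "A = {0..1}" by auto
  then show ?thesis by (auto simp: A_def)
qed

definition evc :: "'b topology \<Rightarrow> 'a topology \<Rightarrow> ('b \<Rightarrow> 'a) \<Rightarrow> 'a set \<Rightarrow> bool" where
  "evc Y X p U \<longleftrightarrow> openin X U \<and> (\<exists>\<V>. \<Union>\<V> = {y \<in> topspace Y. p y \<in> U} \<and> pairwise disjnt \<V> \<and>
             (\<forall>V \<in> \<V>. openin Y V \<and> homeomorphic_map (subtopology Y V) (subtopology X U) p))"

lemma cov_evc:
  assumes "covering_map Y X p" "x \<in> topspace X"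
  shows "\<exists>U. evc Y X p U \<and> x \<in> U"
proof -
  have H: "\<forall>x \<in> topspace X. \<exists>U. openin X U \<and> x \<in> U \<and>
        (\<exists>\<V>. \<Union>\<V> = {y \<in> topspace Y. p y \<in> U} \<and> pairwise disjnt \<V> \<and>
             (\<forall>V \<in> \<V>. openin Y V \<and> homeomorphic_map (subtopology Y V) (subtopology X U) p))"
    using assms(1) unfolding covering_map_def by (elim conjE)
  show ?thesis using bspec[OF H assms(2)] unfolding evc_def by (elim exE conjE) (intro exI conjI; assumption)
qed

lemma evc_sheet:
  assumes "evc Y X p U" "y \<in> topspace Y" "p y \<in> U"
  obtains V s where "openin Y V" "y \<in> V" "continuous_map (subtopology X U) Y s"
     "\<forall>x\<in>U. s x \<in> V \<and> p (s x) = x" "\<forall>y\<in>V. s (p y) = y" "p ` V = U" "inj_on p V"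
proof -
  obtain \<V> where V: "\<Union>\<V> = {y \<in> topspace Y. p y \<in> U}" "pairwise disjnt \<V>"
       "\<forall>V \<in> \<V>. openin Y V \<and> homeomorphic_map (subtopology Y V) (subtopology X U) p" and oU: "openin X U"
    using assms(1) unfolding evc_def by (elim exE conjE) (rule that; assumption)
  have "y \<in> \<Union>\<V>" using assms(2,3) unfolding V(1) by simp
  then obtain V where V1: "V \<in> \<V>" "y \<in> V" by (elim UnionE)
  then have oV: "openin Y V" and hV: "homeomorphic_map (subtopology Y V) (subtopology X U) p" using V(3) by auto
  obtain s where "continuous_map (subtopology X U) Y s" "\<forall>x\<in>U. s x \<in> V \<and> p (s x) = x" "\<forall>y\<in>V. s (p y) = y"
          "p ` V = U" "inj_on p V"
    using sheet_inverse[OF hV oV oU] by (elim exE conjE) (rule that; assumption)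
  then show ?thesis using that oV V1(2) by blast
qed

lemma lift_exists:
  assumes cov: "covering_map Y X p" and g: "pathin X \<gamma>" and y: "y \<in> topspace Y" "p y = \<gamma> 0"
  shows "\<exists>\<delta>. pathin Y \<delta> \<and> \<delta> 0 = y \<and> (\<forall>t\<in>{0..1}. p (\<delta> t) = \<gamma> t)"
proof -
  let ?I = "subtopology euclideanreal {0..1::real}"
  have cg: "continuous_map ?I X \<gamma>" using g by (simp add: pathin_def)
  define \<G> where "\<G> = {B. open B \<and> (\<exists>U. evc Y X p U \<and> (\<forall>s\<in>{0..1} \<inter> B. \<gamma> s \<in> U))}"
  have cover: "{0..1} \<subseteq> \<Union>\<G>"
  proof
    fix t :: real assume t: "t \<in> {0..1}"
    then have "\<gamma> t \<in> topspace X" using path_image_subset_topspace[OF g] by blast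
    then obtain U where U: "evc Y X p U" "\<gamma> t \<in> U" using cov_evc[OF cov] by blast
    then have "openin X U" by (simp add: evc_def)
    then have "openin ?I {s \<in> topspace ?I. \<gamma> s \<in> U}" by (rule openin_continuous_map_preimage[OF cg])
    then obtain B where B: "open B" "{s \<in> topspace ?I. \<gamma> s \<in> U} = {0..1} \<inter> B"
      unfolding openin_open by blast
    have "B \<in> \<G>" unfolding \<G>_def using B U(1) by auto
    moreover have "t \<in> B" using B(2) t U(2) by auto
    ultimately show "t \<in> \<Union>\<G>" by blast
  qed
  have opG: "\<And>G. G \<in> \<G> \<Longrightarrow> open G" by (simp add: \<G>_def)
  have "\<exists>e>0. \<forall>x\<in>{0..1}. \<exists>G\<in>\<G>. ball x e \<subseteq> G"
    by (rule Heine_Borel_lemma[OF compact_Icc cover]) (erule opG, blast)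
  then obtain e where e: "e > 0" "\<And>x. x \<in> {0..1} \<Longrightarrow> \<exists>G\<in>\<G>. ball x e \<subseteq> G"
    by blast
  obtain n where n: "n \<noteq> 0" "inverse (real n) < e" using real_arch_inverse e(1) by blast
  have step: "\<exists>\<delta>. pathin Y \<delta> \<and> \<delta> 0 = y \<and> (\<forall>t\<in>{0..1}. p (\<delta> t) = \<gamma> (min t (real m / real n)))"
    if "m \<le> n" for m
    using that
  proof (induction m)
    case 0
    show ?case using y by (intro exI[of _ "\<lambda>t. y"]) auto
  next
    case (Suc m)
    then obtain \<delta> where d: "pathin Y \<delta>" "\<delta> 0 = y" "\<forall>t\<in>{0..1}. p (\<delta> t) = \<gamma> (min t (real m / real n))"
      by auto
    define a where "a = real m / real n"
    define b where "b = real (Suc m) / real n"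
    have a01: "0 \<le> a" "a \<le> 1" "a \<le> b" "b \<le> 1" "b - a = inverse (real n)"
      using Suc.prems n(1) by (auto simp: a_def b_def field_simps)
    obtain G where G: "G \<in> \<G>" "ball a e \<subseteq> G" using e(2)[of a] a01 by auto
    obtain U where U: "evc Y X p U" "\<forall>s\<in>{0..1} \<inter> G. \<gamma> s \<in> U" using G(1) unfolding \<G>_def by blast
    have inU: "\<gamma> s \<in> U" if "a \<le> s" "s \<le> b" for s
    proof -
      have "dist a s < e" using that a01 n(2) by (simp add: dist_real_def)
      then have "s \<in> G" using G(2) by auto
      then show ?thesis using U(2) that a01 by auto
    qed
    have da: "\<delta> a \<in> topspace Y" using path_image_subset_topspace[OF d(1)] a01 by auto
    have pda: "p (\<delta> a) = \<gamma> a" using d(3) a01 by (simp add: a_def)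
    have "p (\<delta> a) \<in> U" using pda inU[of a] a01 by simp
    then obtain V s where Vs: "openin Y V" "\<delta> a \<in> V" "continuous_map (subtopology X U) Y s"
     "\<forall>x\<in>U. s x \<in> V \<and> p (s x) = x" "\<forall>y\<in>V. s (p y) = y" "p ` V = U" "inj_on p V"
      by (rule evc_sheet[OF U(1) da])
    have sga: "s (\<gamma> a) = \<delta> a"
    proof -
      have "s (p (\<delta> a)) = \<delta> a" using Vs(2,5) by blast
      then show ?thesis using pda by simp
    qed
    define \<delta>' where "\<delta>' = (\<lambda>t. if t \<le> a then \<delta> t else s (\<gamma> (min t b)))"
    have c2: "continuous_map (subtopology ?I {t \<in> topspace ?I. a \<le> t}) Y (\<lambda>t. s (\<gamma> (min t b)))"
    proof -
      have m1: "continuous_map (subtopology ?I {t \<in> topspace ?I. a \<le> t}) ?I (\<lambda>t. min t b)"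
        unfolding continuous_map_in_subtopology
      proof
        show "continuous_map (subtopology ?I {t \<in> topspace ?I. a \<le> t}) euclideanreal (\<lambda>t. min t b)"
          by (intro continuous_map_real_min continuous_map_from_subtopology continuous_map_id[unfolded id_def] continuous_map_const[THEN iffD2]) auto
        show "(\<lambda>t. min t b) \<in> topspace (subtopology ?I {t \<in> topspace ?I. a \<le> t}) \<rightarrow> {0..1}"
          using a01 by auto
      qed
      have m2: "continuous_map (subtopology ?I {t \<in> topspace ?I. a \<le> t}) (subtopology X U) (\<lambda>t. \<gamma> (min t b))"
        unfolding continuous_map_in_subtopology
      proof
        show "continuous_map (subtopology ?I {t \<in> topspace ?I. a \<le> t}) X (\<lambda>t. \<gamma> (min t b))"
          using continuous_map_compose[OF m1 cg] by (simp add: o_def)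
        show "(\<lambda>t. \<gamma> (min t b)) \<in> topspace (subtopology ?I {t \<in> topspace ?I. a \<le> t}) \<rightarrow> U"
          using a01 inU by auto
      qed
      show ?thesis using continuous_map_compose[OF m2 Vs(3)] by (simp add: o_def)
    qed
    have c1: "continuous_map (subtopology ?I {t \<in> topspace ?I. t \<le> a}) Y \<delta>"
      using d(1) unfolding pathin_def by (rule continuous_map_from_subtopology)
    have "continuous_map ?I Y \<delta>'"
      unfolding \<delta>'_def
    proof (rule continuous_map_cases_le)
      show "continuous_map ?I euclideanreal (\<lambda>x. x)"
        by (rule continuous_map_from_subtopology) (simp add: continuous_map_id[unfolded id_def])
      show "continuous_map ?I euclideanreal (\<lambda>x. a)" by simp
      show "continuous_map (subtopology ?I {x \<in> topspace ?I. x \<le> a}) Y \<delta>" by (rule c1)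
      show "continuous_map (subtopology ?I {x \<in> topspace ?I. a \<le> x}) Y (\<lambda>t. s (\<gamma> (min t b)))" by (rule c2)
      show "\<delta> x = s (\<gamma> (min x b))" if "x \<in> topspace ?I" "x = a" for x
        using that a01 sga by simp
    qed
    moreover have "\<delta>' 0 = y" using d(2) a01 by (simp add: \<delta>'_def)
    moreover have "\<forall>t\<in>{0..1}. p (\<delta>' t) = \<gamma> (min t b)"
    proof
      fix t :: real assume t: "t \<in> {0..1}"
      show "p (\<delta>' t) = \<gamma> (min t b)"
      proof (cases "t \<le> a")
        case True
        then have "p (\<delta> t) = \<gamma> t" using d(3) t by (simp add: a_def[symmetric] min_def)
        moreover have "min t b = t" using True a01 by simp
        ultimately show ?thesis using True by (simp add: \<delta>'_def)
      next
        case False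
        then have "\<gamma> (min t b) \<in> U" using inU a01 by auto
        then show ?thesis using False Vs(4) by (simp add: \<delta>'_def)
      qed
    qed
    ultimately show ?case unfolding pathin_def b_def by blast
  qed
  obtain \<delta> where "pathin Y \<delta>" "\<delta> 0 = y" "\<forall>t\<in>{0..1}. p (\<delta> t) = \<gamma> (min t (real n / real n))"
    using step[of n] by blast
  then show ?thesis using n(1) by (intro exI[of _ \<delta>]) auto
qed

definition jp :: "(real \<Rightarrow> 'a) \<Rightarrow> (real \<Rightarrow> 'a) \<Rightarrow> real \<Rightarrow> 'a" where
  "jp d1 d2 = (\<lambda>t. if t \<le> 1/2 then d1 (2 * t) else d2 (2 * t - 1))"

lemma pathin_reparam:
  assumes "pathin X d" "continuous_on {0..1} r" "r \<in> {0..1} \<rightarrow> {0..1}"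
  shows "pathin X (\<lambda>t. d (r t))"
proof -
  have "continuous_map (subtopology euclideanreal {0..1}) (subtopology euclideanreal {0..1}) r"
    using assms(2,3) by simp
  then show ?thesis using pathin_compose[of "subtopology euclideanreal {0..1}" r X d] assms(1)
    unfolding pathin_def by (simp add: o_def)
qed

lemma pathin_jp:
  assumes g1: "pathin X g1" and g2: "pathin X g2" and e: "g1 1 = g2 0"
  shows "pathin X (jp g1 g2)"
  unfolding pathin_def jp_def
proof -
  let ?T01 = "top_of_set {0..1::real}"
  have g1': "continuous_map ?T01 X g1" and g2': "continuous_map ?T01 X g2" using g1 g2 by (auto simp: pathin_def)
  let ?g = "\<lambda>x. if x \<le> 1/2 then (g1 \<circ> (\<lambda>t. 2 * t)) x else (g2 \<circ> (\<lambda>t. 2 * t -1)) x"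
  have "continuous_map (subtopology euclideanreal {0..1}) X ?g"
  proof (intro continuous_map_cases_le continuous_map_compose, force, force)
    show "continuous_map (subtopology ?T01 {x \<in> topspace ?T01. x \<le> 1/2}) ?T01 ((*) 2)"
      by (auto simp: continuous_map_in_subtopology continuous_map_from_subtopology)
    have "continuous_map
           (subtopology (top_of_set {0..1}) {x. 0 \<le> x \<and> x \<le> 1 \<and> 1 \<le> x * 2})
           euclideanreal (\<lambda>t. 2 * t - 1)"
      by (intro continuous_intros) (force intro: continuous_map_from_subtopology)
    then show "continuous_map (subtopology ?T01 {x \<in> topspace ?T01. 1/2 \<le> x}) ?T01 (\<lambda>t. 2 * t - 1)"
      by (force simp: continuous_map_in_subtopology)
    show "(g1 \<circ> (*) 2) x = (g2 \<circ> (\<lambda>t. 2 * t - 1)) x" if "x \<in> topspace ?T01" "x = 1/2" for x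
    proof -
      have "2 * x = 1" using that by simp
      then show ?thesis using e by simp
    qed
  qed (auto simp: g1' g2')
  then show "continuous_map (subtopology euclideanreal {0..1}) X (\<lambda>t. if t \<le> 1 / 2 then g1 (2 * t) else g2 (2 * t - 1))"
    by (simp add: o_def cong: if_cong)
qed

lemma jp_0 [simp]: "jp d1 d2 0 = d1 0" and jp_1 [simp]: "jp d1 d2 1 = d2 1"
  by (auto simp: jp_def)

lemma lpc_local:
  assumes "\<forall>x\<in>topspace X. \<exists>U. openin X U \<and> x \<in> U \<and> locally_path_connected_space (subtopology X U)"
  shows "locally_path_connected_space X"
  unfolding locally_path_connected_space
proof (intro allI impI, elim conjE)
  fix V x assume V: "openin X V" "x \<in> V"
  then have "x \<in> topspace X" using openin_subset by blast
  then obtain U where U: "openin X U" "x \<in> U" "locally_path_connected_space (subtopology X U)" using assms by blast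
  have "openin (subtopology X U) (V \<inter> U)" using V(1) by (simp add: openin_subtopology_Int)
  then obtain W where W: "openin (subtopology X U) W" "path_connectedin (subtopology X U) W" "x \<in> W" "W \<subseteq> V \<inter> U"
    using U(3) V(2) U(2) unfolding locally_path_connected_space by blast
  have "openin X W" using W(1) U(1) openin_open_subtopology by blast
  moreover have "path_connectedin X W" using W(2) by (simp add: path_connectedin_subtopology)
  ultimately show "\<exists>W. openin X W \<and> path_connectedin X W \<and> x \<in> W \<and> W \<subseteq> V" using W(3,4) by blast
qed

lemma lpc_surface:
  assumes "closed_surface X"
  shows "locally_path_connected_space X"
proof (rule lpc_local, intro ballI)
  fix x assume x: "x \<in> topspace X"
  then obtain U where U: "openin X U" "x \<in> U" "subtopology X U homeomorphic_space Euclidean_space 2"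
    using assms unfolding closed_surface_def by blast
  then have "locally_path_connected_space (subtopology X U)"
    using homeomorphic_locally_path_connected_space locally_path_connected_Euclidean_space by blast
  then show "\<exists>U. openin X U \<and> x \<in> U \<and> locally_path_connected_space (subtopology X U)" using U by blast
qed

lemma lpc_cover:
  assumes cov: "covering_map Y X p" and lpc: "locally_path_connected_space X"
  shows "locally_path_connected_space Y"
proof (rule lpc_local, intro ballI)
  fix y assume y: "y \<in> topspace Y"
  obtain U V \<V> where UV: "openin X U" "p y \<in> U" "\<Union>\<V> = {z \<in> topspace Y. p z \<in> U}" "pairwise disjnt \<V>"
     "\<forall>V\<in>\<V>. openin Y V \<and> homeomorphic_map (subtopology Y V) (subtopology X U) p" "V \<in> \<V>" "y \<in> V"
    by (rule cov_localE[OF cov y])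
  then have oV: "openin Y V" and hV: "homeomorphic_map (subtopology Y V) (subtopology X U) p" by auto
  have "locally_path_connected_space (subtopology X U)"
    using lpc UV(1) by (rule locally_path_connected_space_open_subset)
  then have "locally_path_connected_space (subtopology Y V)"
    using homeomorphic_locally_path_connected_space[OF homeomorphic_map_imp_homeomorphic_space[OF hV]] by blast
  then show "\<exists>U. openin Y U \<and> y \<in> U \<and> locally_path_connected_space (subtopology Y U)" using oV UV(7) by blast
qed

lemma continuous_map_local:
  assumes "\<forall>y\<in>topspace Y. \<exists>N. openin Y N \<and> y \<in> N \<and> continuous_map (subtopology Y N) Z h"
  shows "continuous_map Y Z h"
  unfolding continuous_map_def
proof (intro conjI allI impI)
  show "h \<in> topspace Y \<rightarrow> topspace Z"
  proof
    fix y assume "y \<in> topspace Y"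
    then obtain N where N: "openin Y N" "y \<in> N" "continuous_map (subtopology Y N) Z h" using assms by blast
    then have "y \<in> topspace (subtopology Y N)" using \<open>y \<in> topspace Y\<close> by simp
    then show "h y \<in> topspace Z" using N(3) continuous_map_image_subset_topspace by blast
  qed
  fix U assume U: "openin Z U"
  show "openin Y {x \<in> topspace Y. h x \<in> U}"
  proof (subst openin_subopen, intro ballI)
    fix y assume "y \<in> {x \<in> topspace Y. h x \<in> U}"
    then have y: "y \<in> topspace Y" "h y \<in> U" by auto
    then obtain N where N: "openin Y N" "y \<in> N" "continuous_map (subtopology Y N) Z h" using assms by blast
    have "openin (subtopology Y N) {x \<in> topspace (subtopology Y N). h x \<in> U}"
      using openin_continuous_map_preimage[OF N(3) U] .
    then have "openin Y {x \<in> topspace (subtopology Y N). h x \<in> U}"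
      using openin_open_subtopology[OF N(1)] by blast
    moreover have "y \<in> {x \<in> topspace (subtopology Y N). h x \<in> U}" using y N(2) by simp
    moreover have "{x \<in> topspace (subtopology Y N). h x \<in> U} \<subseteq> {x \<in> topspace Y. h x \<in> U}" by auto
    ultimately show "\<exists>T. openin Y T \<and> y \<in> T \<and> T \<subseteq> {x \<in> topspace Y. h x \<in> U}" by blast
  qed
qed

definition cl :: "'b topology \<Rightarrow> ('b \<Rightarrow> 'a) \<Rightarrow> (real \<Rightarrow> 'a) \<Rightarrow> 'b \<Rightarrow> bool" where
  "cl Y p \<gamma> y \<longleftrightarrow> (\<exists>\<delta>. pathin Y \<delta> \<and> \<delta> 0 = y \<and> \<delta> 1 = y \<and> (\<forall>t\<in>{0..1}. p (\<delta> t) = \<gamma> t))"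

definition pres :: "'b topology \<Rightarrow> 'a topology \<Rightarrow> ('b \<Rightarrow> 'a) \<Rightarrow> ('a \<Rightarrow> 'a) \<Rightarrow> bool" where
  "pres Y X p f \<longleftrightarrow> (\<forall>\<gamma> y y'. pathin X \<gamma> \<and> \<gamma> 0 = \<gamma> 1 \<and> y \<in> topspace Y \<and> p y = \<gamma> 0 \<and> cl Y p \<gamma> y
      \<and> y' \<in> topspace Y \<and> p y' = f (\<gamma> 0) \<longrightarrow> cl Y p (\<lambda>t. f (\<gamma> t)) y')"

lemma pathin_rev: "pathin X d \<Longrightarrow> pathin X (\<lambda>t. d (1 - t))"
  by (rule pathin_reparam) (auto intro!: continuous_intros)

lemma pathin_half1: "pathin X d \<Longrightarrow> pathin X (\<lambda>t. d (t / 2))"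
  by (rule pathin_reparam) (auto intro!: continuous_intros)

lemma pathin_half2: "pathin X d \<Longrightarrow> pathin X (\<lambda>t. d (1 - t / 2))"
  by (rule pathin_reparam) (auto intro!: continuous_intros)

lemma pathin_proj: "covering_map Y X p \<Longrightarrow> pathin Y d \<Longrightarrow> pathin X (\<lambda>t. p (d t))"
  using pathin_compose[of Y d X p] cov_map_cont by (auto simp: o_def)

lemma lift_wd:
  assumes cov: "covering_map Y X p" and pr: "pres Y X p f"
    and d1: "pathin Y \<delta>1" and d2: "pathin Y \<delta>2" and d10: "\<delta>1 0 = y0" and d20: "\<delta>2 0 = y0" and d1e: "\<delta>1 1 = \<delta>2 1"
    and e1: "pathin Y \<epsilon>1" "\<epsilon>1 0 = y0'" "\<forall>t\<in>{0..1}. p (\<epsilon>1 t) = f (p (\<delta>1 t))"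
    and e2: "pathin Y \<epsilon>2" "\<epsilon>2 0 = y0'" "\<forall>t\<in>{0..1}. p (\<epsilon>2 t) = f (p (\<delta>2 t))"
    and y0': "y0' \<in> topspace Y" "p y0' = f (p y0)"
  shows "\<epsilon>1 1 = \<epsilon>2 1"
proof -
  define \<delta> where "\<delta> = jp \<delta>1 (\<lambda>t. \<delta>2 (1 - t))"
  have pd: "pathin Y \<delta>" unfolding \<delta>_def by (rule pathin_jp[OF d1 pathin_rev[OF d2]]) (simp add: d1e)
  have d0: "\<delta> 0 = y0" and d1': "\<delta> 1 = y0" using d10 d20 by (auto simp: \<delta>_def)
  define \<gamma> where "\<gamma> = (\<lambda>t. p (\<delta> t))"
  have pg: "pathin X \<gamma>" unfolding \<gamma>_def by (rule pathin_proj[OF cov pd])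
  have y0: "y0 \<in> topspace Y" using path_start_in_topspace[OF d1] d10 by simp
  have "cl Y p \<gamma> y0" unfolding cl_def \<gamma>_def using pd d0 d1' by blast
  then have "cl Y p (\<lambda>t. f (\<gamma> t)) y0'"
    using pr pg y0 y0' d0 d1' unfolding pres_def \<gamma>_def by auto
  then obtain \<epsilon> where ep: "pathin Y \<epsilon>" "\<epsilon> 0 = y0'" "\<epsilon> 1 = y0'" "\<forall>t\<in>{0..1}. p (\<epsilon> t) = f (\<gamma> t)"
    unfolding cl_def by blast
  have A: "\<epsilon>1 1 = \<epsilon> (1/2)"
  proof -
    have "\<forall>t\<in>{0..1}. \<epsilon>1 t = \<epsilon> (t / 2)"
    proof (rule lift_unique[OF cov e1(1) pathin_half1[OF ep(1)]], intro ballI)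
      fix t :: real assume t: "t \<in> {0..1}"
      have "\<delta> (t / 2) = \<delta>1 t" using t by (simp add: \<delta>_def jp_def)
      moreover have "p (\<epsilon> (t / 2)) = f (\<gamma> (t / 2))" using ep(4) t by simp
      ultimately show "p (\<epsilon>1 t) = p (\<epsilon> (t / 2))" using e1(3) t by (simp add: \<gamma>_def)
    next
      show "\<epsilon>1 0 = \<epsilon> (0 / 2)" using e1(2) ep(2) by simp
    qed
    then show ?thesis by simp
  qed
  have B: "\<epsilon>2 1 = \<epsilon> (1/2)"
  proof -
    have "\<forall>t\<in>{0..1}. \<epsilon>2 t = \<epsilon> (1 - t / 2)"
    proof (rule lift_unique[OF cov e2(1) pathin_half2[OF ep(1)]], intro ballI)
      fix t :: real assume t: "t \<in> {0..1}"
      have "\<delta> (1 - t / 2) = \<delta>2 t"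
      proof (cases "t = 1")
        case True
        then show ?thesis using d1e by (simp add: \<delta>_def jp_def)
      next
        case False
        then have "\<not> (1 - t / 2 \<le> 1/2)" using t by auto
        moreover have "1 - (2 * (1 - t / 2) - 1) = t" by simp
        ultimately show ?thesis by (simp add: \<delta>_def jp_def)
      qed
      moreover have "p (\<epsilon> (1 - t / 2)) = f (\<gamma> (1 - t / 2))" using ep(4) t by simp
      ultimately show "p (\<epsilon>2 t) = p (\<epsilon> (1 - t / 2))" using e2(3) t by (simp add: \<gamma>_def)
    next
      show "\<epsilon>2 0 = \<epsilon> (1 - 0 / 2)" using e2(2) ep(3) by simp
    qed
    then show ?thesis by simp
  qed
  show ?thesis using A B by simp
qed

lemma lift_map:
  assumes cov: "covering_map Y X p" and pcY: "path_connected_space Y" and lpc: "locally_path_connected_space X"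
    and fc: "continuous_map X X f" and pr: "pres Y X p f"
    and y0: "y0 \<in> topspace Y" and y0': "y0' \<in> topspace Y" "p y0' = f (p y0)"
  shows "\<exists>h. continuous_map Y Y h \<and> (\<forall>y\<in>topspace Y. p (h y) = f (p y)) \<and> h y0 = y0'"
proof -
  define LIFT where "LIFT \<delta> = (SOME \<epsilon>. pathin Y \<epsilon> \<and> \<epsilon> 0 = y0' \<and> (\<forall>t\<in>{0..1}. p (\<epsilon> t) = f (p (\<delta> t))))" for \<delta>
  have lift_ex: "\<exists>\<epsilon>. pathin Y \<epsilon> \<and> \<epsilon> 0 = y0' \<and> (\<forall>t\<in>{0..1}. p (\<epsilon> t) = f (p (\<delta> t)))"
    if "pathin Y \<delta>" "\<delta> 0 = y0" for \<delta>
  proof -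
    have "pathin X (\<lambda>t. f (p (\<delta> t)))"
      using pathin_compose[OF pathin_proj[OF cov that(1)] fc] by (simp add: o_def)
    moreover have "p y0' = f (p (\<delta> 0))" using that(2) y0' by simp
    ultimately show ?thesis using lift_exists[OF cov _ y0'(1)] by blast
  qed
  define h where "h y = LIFT (SOME \<delta>. pathin Y \<delta> \<and> \<delta> 0 = y0 \<and> \<delta> 1 = y) 1" for y
  have H: "h y = \<epsilon> 1"
    if "pathin Y \<delta>" "\<delta> 0 = y0" "\<delta> 1 = y" "pathin Y \<epsilon>" "\<epsilon> 0 = y0'" "\<forall>t\<in>{0..1}. p (\<epsilon> t) = f (p (\<delta> t))"
    for y \<delta> \<epsilon>
  proof -
    define \<delta>' where "\<delta>' = (SOME \<delta>. pathin Y \<delta> \<and> \<delta> 0 = y0 \<and> \<delta> 1 = y)"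
    have d': "pathin Y \<delta>' \<and> \<delta>' 0 = y0 \<and> \<delta>' 1 = y"
      unfolding \<delta>'_def by (rule someI[of _ \<delta>]) (use that in blast)
    have ex': "\<exists>\<epsilon>. pathin Y \<epsilon> \<and> \<epsilon> 0 = y0' \<and> (\<forall>t\<in>{0..1}. p (\<epsilon> t) = f (p (\<delta>' t)))"
      using lift_ex d' by blast
    have e': "pathin Y (LIFT \<delta>') \<and> LIFT \<delta>' 0 = y0' \<and> (\<forall>t\<in>{0..1}. p (LIFT \<delta>' t) = f (p (\<delta>' t)))"
      unfolding LIFT_def using someI_ex[OF ex'] .
    have "LIFT \<delta>' 1 = \<epsilon> 1"
      using lift_wd[OF cov pr, of \<delta>' \<delta> y0 "LIFT \<delta>'" y0' \<epsilon>] d' e' that y0' by auto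
    then show ?thesis unfolding h_def \<delta>'_def[symmetric] .
  qed
  have hy: "h y \<in> topspace Y \<and> p (h y) = f (p y)" if y: "y \<in> topspace Y" for y
  proof -
    obtain \<delta> where d: "pathin Y \<delta>" "\<delta> 0 = y0" "\<delta> 1 = y"
      using pcY y0 y unfolding path_connected_space_def by blast
    obtain \<epsilon> where e: "pathin Y \<epsilon>" "\<epsilon> 0 = y0'" "\<forall>t\<in>{0..1}. p (\<epsilon> t) = f (p (\<delta> t))"
      using lift_ex[OF d(1,2)] by blast
    have "h y = \<epsilon> 1" by (rule H[OF d e])
    then show ?thesis using path_finish_in_topspace[OF e(1)] e(3) d(3) by auto
  qed
  have hy0: "h y0 = y0'"
    using H[of "\<lambda>t. y0" y0 "\<lambda>t. y0'"] y0 y0' by simp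
  have cont: "continuous_map Y Y h"
  proof (rule continuous_map_local, intro ballI)
    fix y1 assume y1: "y1 \<in> topspace Y"
    define x1 where "x1 = p y1"
    have x1: "x1 \<in> topspace X" unfolding x1_def using cov_map_in[OF cov y1] .
    obtain U where U: "evc Y X p U" "x1 \<in> U" using cov_evc[OF cov x1] by blast
    obtain V s where Vs: "openin Y V" "y1 \<in> V" "continuous_map (subtopology X U) Y s"
     "\<forall>x\<in>U. s x \<in> V \<and> p (s x) = x" "\<forall>y\<in>V. s (p y) = y" "p ` V = U" "inj_on p V"
      by (rule evc_sheet[OF U(1) y1]) (use U(2) x1_def in auto)
    define e where "e = h y1"
    have e: "e \<in> topspace Y" "p e = f x1" using hy[OF y1] unfolding e_def x1_def by auto
    have fx1: "f x1 \<in> topspace X" using cov_map_in[OF cov e(1)] e(2) by simp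
    obtain U' where U': "evc Y X p U'" "f x1 \<in> U'" using cov_evc[OF cov fx1] by blast
    obtain V' s' where Vs': "openin Y V'" "e \<in> V'" "continuous_map (subtopology X U') Y s'"
     "\<forall>x\<in>U'. s' x \<in> V' \<and> p (s' x) = x" "\<forall>y\<in>V'. s' (p y) = y" "p ` V' = U'" "inj_on p V'"
      by (rule evc_sheet[OF U'(1) e(1)]) (use U'(2) e(2) in auto)
    define W0 where "W0 = U \<inter> {x \<in> topspace X. f x \<in> U'}"
    have oW0: "openin X W0" unfolding W0_def
      using U(1) U'(1) openin_continuous_map_preimage[OF fc] by (auto simp: evc_def intro!: openin_Int)
    have "x1 \<in> W0" using U(2) U'(2) x1 by (simp add: W0_def)
    then obtain W where W: "openin X W" "path_connectedin X W" "x1 \<in> W" "W \<subseteq> W0"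
      using lpc oW0 unfolding locally_path_connected_space by blast
    define N where "N = V \<inter> {y \<in> topspace Y. p y \<in> W}"
    have oN: "openin Y N" unfolding N_def
      using Vs(1) openin_continuous_map_preimage[OF cov_map_cont[OF cov] W(1)] by (rule openin_Int)
    have y1N: "y1 \<in> N" using Vs(2) y1 W(3) by (simp add: N_def x1_def)
    have claim: "h y = s' (f (p y))" if yN: "y \<in> N" for y
    proof -
      have yV: "y \<in> V" and pyW: "p y \<in> W" and yY: "y \<in> topspace Y" using yN by (auto simp: N_def)
      obtain \<delta>1 where d1: "pathin Y \<delta>1" "\<delta>1 0 = y0" "\<delta>1 1 = y1"
        using pcY y0 y1 unfolding path_connected_space_def by blast
      obtain \<sigma> where sg: "pathin X \<sigma>" "\<sigma> \<in> {0..1} \<rightarrow> W" "\<sigma> 0 = x1" "\<sigma> 1 = p y"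
        using W(2) W(3) pyW unfolding path_connectedin by blast
      have sgU: "\<sigma> t \<in> U" and sgU': "f (\<sigma> t) \<in> U'" if "t \<in> {0..1}" for t
        using sg(2) that W(4) by (auto simp: W0_def)
      define st where "st = (\<lambda>t. s (\<sigma> t))"
      have pst: "pathin Y st"
      proof -
        have "pathin (subtopology X U) \<sigma>" using sg(1) sgU by (simp add: pathin_subtopology)
        then show ?thesis using pathin_compose[OF _ Vs(3)] by (simp add: st_def o_def)
      qed
      have st0: "st 0 = y1" using Vs(5) Vs(2) sg(3) by (simp add: st_def x1_def)
      have st1: "st 1 = y" using Vs(5) yV sg(4) by (simp add: st_def)
      have pst_t: "p (st t) = \<sigma> t" if "t \<in> {0..1}" for t
        using Vs(4) sgU[OF that] by (simp add: st_def)
      define \<delta> where "\<delta> = jp \<delta>1 st"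
      have pd: "pathin Y \<delta>" unfolding \<delta>_def by (rule pathin_jp[OF d1(1) pst]) (simp add: d1(3) st0)
      obtain \<epsilon>1 where e1: "pathin Y \<epsilon>1" "\<epsilon>1 0 = y0'" "\<forall>t\<in>{0..1}. p (\<epsilon>1 t) = f (p (\<delta>1 t))"
        using lift_ex[OF d1(1,2)] by blast
      have e11: "\<epsilon>1 1 = e" unfolding e_def using H[OF d1 e1] by simp
      define \<tau> where "\<tau> = (\<lambda>t. s' (f (\<sigma> t)))"
      have ptau: "pathin Y \<tau>"
      proof -
        have "pathin X (\<lambda>t. f (\<sigma> t))" using pathin_compose[OF sg(1) fc] by (simp add: o_def)
        then have "pathin (subtopology X U') (\<lambda>t. f (\<sigma> t))" using sgU' by (simp add: pathin_subtopology)
        then show ?thesis using pathin_compose[OF _ Vs'(3)] by (simp add: \<tau>_def o_def)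
      qed
      have tau0: "\<tau> 0 = e" using Vs'(5) Vs'(2) e(2) sg(3) by (metis \<tau>_def)
      have ptau_t: "p (\<tau> t) = f (\<sigma> t)" if "t \<in> {0..1}" for t
        using Vs'(4) sgU'[OF that] by (simp add: \<tau>_def)
      define \<epsilon> where "\<epsilon> = jp \<epsilon>1 \<tau>"
      have pe: "pathin Y \<epsilon>" unfolding \<epsilon>_def by (rule pathin_jp[OF e1(1) ptau]) (simp add: e11 tau0)
      have e0: "\<epsilon> 0 = y0'" using e1(2) by (simp add: \<epsilon>_def)
      have elift: "\<forall>t\<in>{0..1}. p (\<epsilon> t) = f (p (\<delta> t))"
      proof
        fix t :: real assume t: "t \<in> {0..1}"
        show "p (\<epsilon> t) = f (p (\<delta> t))"
        proof (cases "t \<le> 1/2")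
          case True
          then have "2 * t \<in> {0..1}" using t by auto
          then show ?thesis using True e1(3) by (simp add: \<epsilon>_def \<delta>_def jp_def)
        next
          case False
          then have t2: "2 * t - 1 \<in> {0..1}" using t by auto
          have "p (\<epsilon> t) = p (\<tau> (2 * t - 1))" using False by (simp add: \<epsilon>_def jp_def)
          also have "\<dots> = f (\<sigma> (2 * t - 1))" by (rule ptau_t[OF t2])
          also have "\<dots> = f (p (st (2 * t - 1)))" using pst_t[OF t2] by simp
          also have "\<dots> = f (p (\<delta> t))" using False by (simp add: \<delta>_def jp_def)
          finally show ?thesis .
        qed
      qed
      have "h y = \<epsilon> 1" by (rule H[OF pd _ _ pe e0 elift]) (simp_all add: \<delta>_def d1(2) st1)
      also have "\<dots> = s' (f (p y))" using sg(4) by (simp add: \<epsilon>_def \<tau>_def)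
      finally show ?thesis .
    qed
    have "continuous_map (subtopology Y N) Y (\<lambda>y. s' (f (p y)))"
    proof -
      have pN: "continuous_map (subtopology Y N) X p"
        using cov_map_cont[OF cov] by (rule continuous_map_from_subtopology)
      have "continuous_map (subtopology Y N) (subtopology X U') (\<lambda>y. f (p y))"
      proof (rule continuous_map_into_subtopology)
        show "continuous_map (subtopology Y N) X (\<lambda>y. f (p y))"
          using continuous_map_compose[OF pN fc] by (simp add: o_def)
        show "(\<lambda>y. f (p y)) \<in> topspace (subtopology Y N) \<rightarrow> U'"
          using W(4) by (auto simp: N_def W0_def)
      qed
      then show ?thesis using continuous_map_compose[OF _ Vs'(3)] by (simp add: o_def)
    qed
    then have "continuous_map (subtopology Y N) Y h"
      by (rule continuous_map_eq) (simp add: claim)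
    then show "\<exists>N. openin Y N \<and> y1 \<in> N \<and> continuous_map (subtopology Y N) Y h"
      using oN y1N by blast
  qed
  show ?thesis using cont hy hy0 by blast
qed

lemma lift_id:
  assumes cov: "covering_map Y X p" and pcY: "path_connected_space Y"
    and k: "continuous_map Y Y k" "\<forall>y\<in>topspace Y. p (k y) = p y" and y0: "y0 \<in> topspace Y" "k y0 = y0"
    and y: "y \<in> topspace Y"
  shows "k y = y"
proof -
  obtain \<delta> where d: "pathin Y \<delta>" "\<delta> 0 = y0" "\<delta> 1 = y"
    using pcY y0 y unfolding path_connected_space_def by blast
  have pk: "pathin Y (\<lambda>t. k (\<delta> t))" using pathin_compose[OF d(1) k(1)] by (simp add: o_def)
  have "\<forall>t\<in>{0..1}. k (\<delta> t) = \<delta> t"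
  proof (rule lift_unique[OF cov pk d(1)])
    show "\<forall>t\<in>{0..1}. p (k (\<delta> t)) = p (\<delta> t)" using k(2) path_image_subset_topspace[OF d(1)] by auto
    show "k (\<delta> 0) = \<delta> 0" using d(2) y0(2) by simp
  qed
  then show ?thesis using d(3) by auto
qed

lemma lift_homeo:
  assumes cov: "covering_map Y X p" and pcY: "path_connected_space Y" and lpc: "locally_path_connected_space X"
    and fc: "continuous_map X X f" and gc: "continuous_map X X g"
    and gf: "\<forall>x\<in>topspace X. g (f x) = x" and fg: "\<forall>x\<in>topspace X. f (g x) = x"
    and prF: "pres Y X p f" and prG: "pres Y X p g" and ne: "topspace Y \<noteq> {}"
  shows "lifts_to_homeo Y X p f"
proof -
  obtain y0 where y0: "y0 \<in> topspace Y" using ne by blast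
  have px: "p y0 \<in> topspace X" using cov_map_in[OF cov y0] .
  then have "f (p y0) \<in> topspace X" using fc continuous_map_image_subset_topspace by blast
  moreover have "p ` topspace Y = topspace X" using cov by (simp add: covering_map_def)
  ultimately obtain y0' where y0': "y0' \<in> topspace Y" "p y0' = f (p y0)" by (metis imageE)
  obtain h where h: "continuous_map Y Y h" "\<forall>y\<in>topspace Y. p (h y) = f (p y)" "h y0 = y0'"
    using lift_map[OF cov pcY lpc fc prF y0 y0'] by blast
  have "p y0 = g (p y0')" using y0'(2) gf px by simp
  then obtain h' where h': "continuous_map Y Y h'" "\<forall>y\<in>topspace Y. p (h' y) = g (p y)" "h' y0' = y0"
    using lift_map[OF cov pcY lpc gc prG y0'(1) y0] by blast
  have hY: "h y \<in> topspace Y" if "y \<in> topspace Y" for y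
    using h(1) that continuous_map_image_subset_topspace by blast
  have h'Y: "h' y \<in> topspace Y" if "y \<in> topspace Y" for y
    using h'(1) that continuous_map_image_subset_topspace by blast
  have A: "h' (h y) = y" if "y \<in> topspace Y" for y
  proof (rule lift_id[OF cov pcY, of "\<lambda>y. h' (h y)" y0])
    show "continuous_map Y Y (\<lambda>y. h' (h y))" using continuous_map_compose[OF h(1) h'(1)] by (simp add: o_def)
    show "\<forall>y\<in>topspace Y. p (h' (h y)) = p y"
      using h(2) h'(2) hY gf cov_map_in[OF cov] by simp
  qed (use y0 h(3) h'(3) that in auto)
  have B: "h (h' y) = y" if "y \<in> topspace Y" for y
  proof (rule lift_id[OF cov pcY, of "\<lambda>y. h (h' y)" y0'])
    show "continuous_map Y Y (\<lambda>y. h (h' y))" using continuous_map_compose[OF h'(1) h(1)] by (simp add: o_def)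
    show "\<forall>y\<in>topspace Y. p (h (h' y)) = p y"
      using h(2) h'(2) h'Y fg cov_map_in[OF cov] by simp
  qed (use y0' h(3) h'(3) that in auto)
  have "homeomorphic_maps Y Y h h'" unfolding homeomorphic_maps_def using h(1) h'(1) A B by blast
  then have "homeomorphic_map Y Y h" using homeomorphic_map_maps by blast
  then show ?thesis unfolding lifts_to_homeo_def using h(2) by blast
qed

lemma loop_simplex_ss:
  assumes g: "pathin X \<gamma>"
  shows "singular_simplex 1 X (loop_simplex \<gamma>)"
  unfolding singular_simplex_def loop_simplex_def
proof
  let ?S = "subtopology (powertop_real UNIV) (standard_simplex 1)"
  have pr: "continuous_map ?S (subtopology euclideanreal {0..1}) (\<lambda>x. x 1)"
  proof (rule continuous_map_into_subtopology)
    show "continuous_map ?S euclideanreal (\<lambda>x. x 1)"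
      by (rule continuous_map_from_subtopology) (rule continuous_map_product_projection, simp)
    show "(\<lambda>x. x 1) \<in> topspace ?S \<rightarrow> {0..1}"
      by (auto simp: standard_simplex_def)
  qed
  have "continuous_map ?S X (\<lambda>x. \<gamma> (x 1))"
    using continuous_map_compose[OF pr g[unfolded pathin_def]] by (simp add: o_def)
  then show "continuous_map ?S X (restrict (\<lambda>x. \<gamma> (x 1)) (standard_simplex 1))"
    by (rule continuous_map_eq) simp
qed simp

lemma std0: "x \<in> standard_simplex 0 \<Longrightarrow> x 0 = 1"
  by (simp add: standard_simplex_def)

lemma loop_relcycle:
  assumes g: "pathin X \<gamma>" and c: "\<gamma> 0 = \<gamma> 1"
  shows "singular_relcycle 1 X {} (frag_of (loop_simplex \<gamma>))"
  unfolding singular_cycle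
proof
  show "singular_chain 1 X (frag_of (loop_simplex \<gamma>))"
    using loop_simplex_ss[OF g] by (simp add: singular_chain_of)
  have f: "singular_face 1 0 (loop_simplex \<gamma>) = singular_face 1 1 (loop_simplex \<gamma>)"
  proof
    fix x :: "nat \<Rightarrow> real"
    show "singular_face 1 0 (loop_simplex \<gamma>) x = singular_face 1 1 (loop_simplex \<gamma>) x"
    proof (cases "x \<in> standard_simplex 0")
      case True
      have a: "simplical_face 0 x \<in> standard_simplex 1"
        using simplical_face_in_standard_simplex[of 1 0 x] True by simp
      have b: "simplical_face 1 x \<in> standard_simplex 1"
        using simplical_face_in_standard_simplex[of 1 1 x] True by simp
      have "simplical_face 0 x 1 = 1" using std0[OF True] by (simp add: simplical_face_def)
      moreover have "simplical_face 1 x 1 = 0" by (simp add: simplical_face_def)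
      ultimately show ?thesis using True a b c by (simp add: singular_face_def loop_simplex_def)
    next
      case False
      then show ?thesis by (simp add: singular_face_def)
    qed
  qed
  show "chain_boundary 1 (frag_of (loop_simplex \<gamma>)) = 0"
    using f by (simp add: chain_boundary_of)
qed

lemma loop_class_carrier:
  assumes "pathin X \<gamma>" "\<gamma> 0 = \<gamma> 1"
  shows "loop_class X \<gamma> \<in> carrier (homology_group 1 X)"
  using carrier_relative_homology_group[of 1 X "{}"] loop_relcycle[OF assms]
  unfolding loop_class_def by simp

lemma loop_class_map:
  assumes g: "pathin X \<gamma>" "\<gamma> 0 = \<gamma> 1" and f: "continuous_map X X f"
  shows "loop_class X (\<lambda>t. f (\<gamma> t)) = hom_induced 1 X {} X {} f (loop_class X \<gamma>)"
proof -
  have "hom_induced (int 1) X {} X {} f (loop_class X \<gamma>) = homologous_rel_set 1 X {} (chain_map 1 f (frag_of (loop_simplex \<gamma>)))"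
    unfolding loop_class_def by (rule hom_induced_chain_map[OF f _ loop_relcycle[OF g]]) simp
  moreover have "chain_map 1 f (frag_of (loop_simplex \<gamma>)) = frag_of (loop_simplex (\<lambda>t. f (\<gamma> t)))"
  proof -
    have "simplex_map 1 f (loop_simplex \<gamma>) = loop_simplex (\<lambda>t. f (\<gamma> t))"
      by (rule ext) (simp add: simplex_map_def loop_simplex_def)
    then show ?thesis by simp
  qed
  ultimately show ?thesis by (simp add: loop_class_def)
qed

definition ab_ok :: "'a topology \<Rightarrow> nat \<Rightarrow> (nat \<Rightarrow> real \<Rightarrow> 'a) \<Rightarrow> (nat \<Rightarrow> real \<Rightarrow> 'a) \<Rightarrow> bool" where
  "ab_ok X g a b \<longleftrightarrow> (\<forall>i\<in>{1..g}. loop_class X (a i) \<in> carrier (homology_group 1 X) \<and> loop_class X (b i) \<in> carrier (homology_group 1 X))"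

lemma hcomb_carrier:
  assumes "ab_ok X g a b"
  shows "hcomb X g a b n m \<in> carrier (homology_group 1 X)"
proof -
  interpret H: comm_group "homology_group 1 X" by (rule abelian_homology_group)
  show ?thesis unfolding hcomb_def using assms unfolding ab_ok_def by (intro H.finprod_closed) auto
qed

lemma hcomb_cong:
  assumes ok: "ab_ok X g a b" and "\<forall>i\<in>{1..g}. n i = n' i \<and> m i = m' i"
  shows "hcomb X g a b n m = hcomb X g a b n' m'"
proof -
  interpret H: comm_group "homology_group 1 X" by (rule abelian_homology_group)
  show ?thesis unfolding hcomb_def using assms unfolding ab_ok_def by (intro H.finprod_cong) auto
qed

lemma hcomb_mult:
  assumes ok: "ab_ok X g a b"
  shows "hcomb X g a b n m \<otimes>\<^bsub>homology_group 1 X\<^esub> hcomb X g a b n' m' = hcomb X g a b (\<lambda>i. n i + n' i) (\<lambda>i. m i + m' i)"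
proof -
  interpret H: comm_group "homology_group 1 X" by (rule abelian_homology_group)
  let ?A = "\<lambda>i. loop_class X (a i)" and ?B = "\<lambda>i. loop_class X (b i)"
  have AB: "?A i \<in> carrier (homology_group 1 X)" "?B i \<in> carrier (homology_group 1 X)" if "i \<in> {1..g}" for i
    using ok that unfolding ab_ok_def by auto
  have "hcomb X g a b n m \<otimes>\<^bsub>homology_group 1 X\<^esub> hcomb X g a b n' m' =
     finprod (homology_group 1 X) (\<lambda>i. (?A i [^]\<^bsub>homology_group 1 X\<^esub> n i \<otimes>\<^bsub>homology_group 1 X\<^esub> ?B i [^]\<^bsub>homology_group 1 X\<^esub> m i)
       \<otimes>\<^bsub>homology_group 1 X\<^esub> (?A i [^]\<^bsub>homology_group 1 X\<^esub> n' i \<otimes>\<^bsub>homology_group 1 X\<^esub> ?B i [^]\<^bsub>homology_group 1 X\<^esub> m' i)) {1..g}"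
    unfolding hcomb_def by (rule H.finprod_multf[symmetric]) (auto simp: AB)
  also have "\<dots> = hcomb X g a b (\<lambda>i. n i + n' i) (\<lambda>i. m i + m' i)"
    unfolding hcomb_def
  proof (rule H.finprod_cong')
    show "(\<lambda>i. ?A i [^]\<^bsub>homology_group 1 X\<^esub> (n i + n' i) \<otimes>\<^bsub>homology_group 1 X\<^esub> ?B i [^]\<^bsub>homology_group 1 X\<^esub> (m i + m' i)) \<in> {1..g} \<rightarrow> carrier (homology_group 1 X)"
      using AB by auto
    fix i assume i: "i \<in> {1..g}"
    show "(?A i [^]\<^bsub>homology_group 1 X\<^esub> n i \<otimes>\<^bsub>homology_group 1 X\<^esub> ?B i [^]\<^bsub>homology_group 1 X\<^esub> m i)
       \<otimes>\<^bsub>homology_group 1 X\<^esub> (?A i [^]\<^bsub>homology_group 1 X\<^esub> n' i \<otimes>\<^bsub>homology_group 1 X\<^esub> ?B i [^]\<^bsub>homology_group 1 X\<^esub> m' i)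
       = ?A i [^]\<^bsub>homology_group 1 X\<^esub> (n i + n' i) \<otimes>\<^bsub>homology_group 1 X\<^esub> ?B i [^]\<^bsub>homology_group 1 X\<^esub> (m i + m' i)"
      using AB[OF i] by (simp add: H.int_pow_mult H.m_ac)
  qed simp
  finally show ?thesis .
qed

lemma hcomb_zero:
  assumes ok: "ab_ok X g a b"
  shows "hcomb X g a b (\<lambda>i. 0) (\<lambda>i. 0) = \<one>\<^bsub>homology_group 1 X\<^esub>"
proof -
  interpret H: comm_group "homology_group 1 X" by (rule abelian_homology_group)
  show ?thesis unfolding hcomb_def using ok unfolding ab_ok_def by (intro H.finprod_one_eqI) auto
qed

lemma hcomb_inv:
  assumes ok: "ab_ok X g a b"
  shows "inv\<^bsub>homology_group 1 X\<^esub> (hcomb X g a b n m) = hcomb X g a b (\<lambda>i. - n i) (\<lambda>i. - m i)"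
proof -
  interpret H: comm_group "homology_group 1 X" by (rule abelian_homology_group)
  show ?thesis
    by (rule H.inv_equality) (simp_all add: hcomb_mult[OF ok] hcomb_zero[OF ok] hcomb_carrier[OF ok])
qed

lemma hcomb_pow:
  assumes ok: "ab_ok X g a b"
  shows "hcomb X g a b n m [^]\<^bsub>homology_group 1 X\<^esub> (k::nat) = hcomb X g a b (\<lambda>i. int k * n i) (\<lambda>i. int k * m i)"
proof (induction k)
  case 0
  then show ?case using hcomb_zero[OF ok] by simp
next
  case (Suc k)
  have "hcomb X g a b n m [^]\<^bsub>homology_group 1 X\<^esub> Suc k = hcomb X g a b (\<lambda>i. int k * n i) (\<lambda>i. int k * m i) \<otimes>\<^bsub>homology_group 1 X\<^esub> hcomb X g a b n m"
    using Suc by simp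
  also have "\<dots> = hcomb X g a b (\<lambda>i. int (Suc k) * n i) (\<lambda>i. int (Suc k) * m i)"
    by (simp add: hcomb_mult[OF ok] algebra_simps)
  finally show ?case .
qed

lemma in_ker_closed:
  assumes ok: "ab_ok X g a b" and g1: "g \<ge> 1" and basis: "homology_basis X g a b"
    and c: "in_ker_phi X g a b k c" and d: "d \<in> carrier (homology_group 1 X)"
  shows "in_ker_phi X g a b k (c \<otimes>\<^bsub>homology_group 1 X\<^esub> d [^]\<^bsub>homology_group 1 X\<^esub> k)"
    and "in_ker_phi X g a b k (c \<otimes>\<^bsub>homology_group 1 X\<^esub> inv\<^bsub>homology_group 1 X\<^esub> (d [^]\<^bsub>homology_group 1 X\<^esub> k))"
proof -
  obtain n m where nm: "n \<in> {1..g} \<rightarrow>\<^sub>E UNIV" "m \<in> {1..g} \<rightarrow>\<^sub>E UNIV" "c = hcomb X g a b n m" "int k dvd m 1"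
    using c unfolding in_ker_phi_def by blast
  obtain nm' where "nm' \<in> ({1..g} \<rightarrow>\<^sub>E UNIV) \<times> ({1..g} \<rightarrow>\<^sub>E UNIV)" "d = hcomb X g a b (fst nm') (snd nm')"
  proof -
    have "\<exists>!nm. nm \<in> ({1..g} \<rightarrow>\<^sub>E UNIV) \<times> ({1..g} \<rightarrow>\<^sub>E UNIV) \<and> d = hcomb X g a b (fst nm) (snd nm)"
      using basis d unfolding homology_basis_def by (rule bspec)
    then show ?thesis using that by (elim ex1E conjE) 
  qed
  then obtain n' m' where d': "d = hcomb X g a b n' m'" by blast
  have one: "1 \<in> {1..g}" using g1 by simp
  define N where "N = restrict (\<lambda>i. n i + int k * n' i) {1..g}"
  define M where "M = restrict (\<lambda>i. m i + int k * m' i) {1..g}"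
  have "c \<otimes>\<^bsub>homology_group 1 X\<^esub> d [^]\<^bsub>homology_group 1 X\<^esub> k = hcomb X g a b N M"
    unfolding nm(3) d' hcomb_pow[OF ok] hcomb_mult[OF ok] N_def M_def by (rule hcomb_cong[OF ok]) simp
  moreover have "int k dvd M 1" using nm(4) one by (simp add: M_def)
  moreover have "N \<in> {1..g} \<rightarrow>\<^sub>E UNIV" "M \<in> {1..g} \<rightarrow>\<^sub>E UNIV" by (simp_all add: N_def M_def)
  ultimately show "in_ker_phi X g a b k (c \<otimes>\<^bsub>homology_group 1 X\<^esub> d [^]\<^bsub>homology_group 1 X\<^esub> k)"
    unfolding in_ker_phi_def by (intro exI[of _ N] exI[of _ M] conjI) simp_all
  define N' where "N' = restrict (\<lambda>i. n i + - (int k * n' i)) {1..g}"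
  define M' where "M' = restrict (\<lambda>i. m i + - (int k * m' i)) {1..g}"
  have "c \<otimes>\<^bsub>homology_group 1 X\<^esub> inv\<^bsub>homology_group 1 X\<^esub> (d [^]\<^bsub>homology_group 1 X\<^esub> k) = hcomb X g a b N' M'"
    unfolding nm(3) d' hcomb_pow[OF ok] hcomb_inv[OF ok] hcomb_mult[OF ok] N'_def M'_def by (rule hcomb_cong[OF ok]) simp
  moreover have "int k dvd M' 1" using nm(4) one by (simp add: M'_def)
  moreover have "N' \<in> {1..g} \<rightarrow>\<^sub>E UNIV" "M' \<in> {1..g} \<rightarrow>\<^sub>E UNIV" by (simp_all add: N'_def M'_def)
  ultimately show "in_ker_phi X g a b k (c \<otimes>\<^bsub>homology_group 1 X\<^esub> inv\<^bsub>homology_group 1 X\<^esub> (d [^]\<^bsub>homology_group 1 X\<^esub> k))"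
    unfolding in_ker_phi_def by (intro exI[of _ N'] exI[of _ M'] conjI) simp_all
qed

lemma pres_of_ker:
  assumes cov: "cover_of_ker_phi Y X p g a b k" and fc: "continuous_map X X f"
    and ker: "\<forall>c\<in>carrier (homology_group 1 X). in_ker_phi X g a b k c \<longrightarrow> in_ker_phi X g a b k (hom_induced 1 X {} X {} f c)"
  shows "pres Y X p f"
  unfolding pres_def
proof (intro allI impI, elim conjE)
  fix \<gamma> y y' assume g: "pathin X \<gamma>" "\<gamma> 0 = \<gamma> 1" and y: "y \<in> topspace Y" "p y = \<gamma> 0" and c: "cl Y p \<gamma> y"
    and y': "y' \<in> topspace Y" "p y' = f (\<gamma> 0)"
  have K: "\<forall>\<gamma> y. pathin X \<gamma> \<and> \<gamma> 0 = \<gamma> 1 \<and> y \<in> topspace Y \<and> p y = \<gamma> 0 \<longrightarrow>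
        ((\<exists>\<delta>. pathin Y \<delta> \<and> \<delta> 0 = y \<and> \<delta> 1 = y \<and> (\<forall>t\<in>{0..1}. p (\<delta> t) = \<gamma> t))
          \<longleftrightarrow> in_ker_phi X g a b k (loop_class X \<gamma>))"
    using cov unfolding cover_of_ker_phi_def by (elim conjE)
  have "in_ker_phi X g a b k (loop_class X \<gamma>)"
    using K[rule_format, of \<gamma> y] g y c unfolding cl_def by blast
  then have "in_ker_phi X g a b k (hom_induced 1 X {} X {} f (loop_class X \<gamma>))"
    using ker loop_class_carrier[OF g] by blast
  then have kf: "in_ker_phi X g a b k (loop_class X (\<lambda>t. f (\<gamma> t)))"
    using loop_class_map[OF g fc] by simp
  have "pathin X (\<lambda>t. f (\<gamma> t))" using pathin_compose[OF g(1) fc] by (simp add: o_def)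
  then show "cl Y p (\<lambda>t. f (\<gamma> t)) y'"
    using K[rule_format, of "\<lambda>t. f (\<gamma> t)" y'] kf g(2) y' unfolding cl_def by simp
qed

lemma ker_of_acts:
  assumes ok: "ab_ok X g a b" and g1: "g \<ge> 1" and basis: "homology_basis X g a b"
    and acts: "acts_trivially_mod X k f"
  shows "\<forall>c\<in>carrier (homology_group 1 X). in_ker_phi X g a b k c \<longrightarrow> in_ker_phi X g a b k (hom_induced 1 X {} X {} f c)"
proof (intro ballI impI)
  fix c assume c: "c \<in> carrier (homology_group 1 X)" "in_ker_phi X g a b k c"
  obtain d where d: "d \<in> carrier (homology_group 1 X)"
     "hom_induced 1 X {} X {} f c = c \<otimes>\<^bsub>homology_group 1 X\<^esub> (d [^]\<^bsub>homology_group 1 X\<^esub> k)"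
    using acts c(1) unfolding acts_trivially_mod_def by blast
  show "in_ker_phi X g a b k (hom_induced 1 X {} X {} f c)"
    unfolding d(2) by (rule in_ker_closed(1)[OF ok g1 basis c(2) d(1)])
qed

lemma hom_induced_inverse:
  assumes fc: "continuous_map X X f" and hc: "continuous_map X X h" and fh: "\<forall>x\<in>topspace X. f (h x) = x"
    and c: "c \<in> carrier (homology_group 1 X)"
  shows "hom_induced 1 X {} X {} f (hom_induced 1 X {} X {} h c) = c"
proof -
  have "hom_induced 1 X {} X {} (f \<circ> h) = hom_induced 1 X {} X {} f \<circ> hom_induced 1 X {} X {} h"
    by (rule hom_induced_compose[OF hc _ fc]) auto
  moreover have "hom_induced 1 X {} X {} (f \<circ> h) c = c"
    by (rule hom_induced_id_gen) (use continuous_map_compose[OF hc fc] fh c in auto)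
  ultimately show ?thesis by (simp add: o_def)
qed

lemma ker_of_acts_inv:
  assumes ok: "ab_ok X g a b" and g1: "g \<ge> 1" and basis: "homology_basis X g a b"
    and acts: "acts_trivially_mod X k f" and fc: "continuous_map X X f" and hc: "continuous_map X X h"
    and fh: "\<forall>x\<in>topspace X. f (h x) = x"
  shows "\<forall>c\<in>carrier (homology_group 1 X). in_ker_phi X g a b k c \<longrightarrow> in_ker_phi X g a b k (hom_induced 1 X {} X {} h c)"
proof (intro ballI impI)
  interpret H: comm_group "homology_group 1 X" by (rule abelian_homology_group)
  fix c assume c: "c \<in> carrier (homology_group 1 X)" "in_ker_phi X g a b k c"
  have hc_c: "hom_induced 1 X {} X {} h c \<in> carrier (homology_group 1 X)" by (rule hom_induced_carrier)
  obtain d where d: "d \<in> carrier (homology_group 1 X)"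
     "hom_induced 1 X {} X {} f (hom_induced 1 X {} X {} h c) = hom_induced 1 X {} X {} h c \<otimes>\<^bsub>homology_group 1 X\<^esub> (d [^]\<^bsub>homology_group 1 X\<^esub> k)"
    using acts hc_c unfolding acts_trivially_mod_def by blast
  have "c = hom_induced 1 X {} X {} h c \<otimes>\<^bsub>homology_group 1 X\<^esub> (d [^]\<^bsub>homology_group 1 X\<^esub> k)"
    using d(2) hom_induced_inverse[OF fc hc fh c(1)] by simp
  then have "c \<otimes>\<^bsub>homology_group 1 X\<^esub> inv\<^bsub>homology_group 1 X\<^esub> (d [^]\<^bsub>homology_group 1 X\<^esub> k) =
     (hom_induced 1 X {} X {} h c \<otimes>\<^bsub>homology_group 1 X\<^esub> (d [^]\<^bsub>homology_group 1 X\<^esub> k)) \<otimes>\<^bsub>homology_group 1 X\<^esub> inv\<^bsub>homology_group 1 X\<^esub> (d [^]\<^bsub>homology_group 1 X\<^esub> k)"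
    by (rule arg_cong[where f="\<lambda>z. z \<otimes>\<^bsub>homology_group 1 X\<^esub> inv\<^bsub>homology_group 1 X\<^esub> (d [^]\<^bsub>homology_group 1 X\<^esub> k)"])
  also have "\<dots> = hom_induced 1 X {} X {} h c"
    using hc_c d(1) by (simp add: H.m_assoc)
  finally have "c \<otimes>\<^bsub>homology_group 1 X\<^esub> inv\<^bsub>homology_group 1 X\<^esub> (d [^]\<^bsub>homology_group 1 X\<^esub> k) = hom_induced 1 X {} X {} h c" .
  then show "in_ker_phi X g a b k (hom_induced 1 X {} X {} h c)"
    using in_ker_closed(2)[OF ok g1 basis c(2) d(1)] by simp
qed

lemma acts_lifts:
  assumes cov: "cover_of_ker_phi Y X p g a b k" and surf: "closed_surface X"
    and ok: "ab_ok X g a b" and g1: "g \<ge> 1" and basis: "homology_basis X g a b"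
    and hf: "homeomorphic_map X X f" and acts: "acts_trivially_mod X k f"
  shows "lifts_to_homeo Y X p f"
proof -
  obtain h where fh: "homeomorphic_maps X X f h" using hf homeomorphic_map_maps by blast
  then have fc: "continuous_map X X f" and hc: "continuous_map X X h"
    and hf': "\<forall>x\<in>topspace X. h (f x) = x" and fh': "\<forall>x\<in>topspace X. f (h x) = x"
    unfolding homeomorphic_maps_def by auto
  have cm: "covering_map Y X p" and cY: "connected_space Y" using cov unfolding cover_of_ker_phi_def by auto
  have lpc: "locally_path_connected_space X" using surf by (rule lpc_surface)
  have pcY: "path_connected_space Y"
    using path_connected_eq_connected_space[OF lpc_cover[OF cm lpc]] cY by simp
  have "p ` topspace Y = topspace X" using cm by (simp add: covering_map_def)
  moreover have "topspace X \<noteq> {}" using surf by (simp add: closed_surface_def)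
  ultimately have ne: "topspace Y \<noteq> {}" by (metis image_empty)
  have pf: "pres Y X p f" by (rule pres_of_ker[OF cov fc ker_of_acts[OF ok g1 basis acts]])
  have ph: "pres Y X p h" by (rule pres_of_ker[OF cov hc ker_of_acts_inv[OF ok g1 basis acts fc hc fh']])
  show ?thesis by (rule lift_homeo[OF cm pcY lpc fc hc hf' fh' pf ph ne])
qed

lemma isotopic_cong:
  assumes "\<forall>x\<in>topspace X. f x = f' x"
  shows "isotopic X f h = isotopic X f' h"
  using assms unfolding isotopic_def by auto

lemma iso_refl:
  assumes "homeomorphic_map X X f" "\<forall>x\<in>topspace X. f x = f' x"
  shows "isotopic X f f'"
  unfolding isotopic_def
proof (intro exI[of _ "\<lambda>z. f (snd z)"] conjI ballI)
  show "continuous_map (prod_topology (top_of_set {0..1}) X) X (\<lambda>z. f (snd z))"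
    using continuous_map_compose[OF continuous_map_snd homeomorphic_imp_continuous_map[OF assms(1)]]
    by (simp add: o_def)
qed (use assms in auto)

lemma cm_fst01:
  "continuous_map (prod_topology (top_of_set {0..1::real}) X) euclideanreal fst"
  using continuous_map_fst[of "top_of_set {0..1::real}" X] by (simp add: continuous_map_in_subtopology)

lemma iso_sym:
  assumes "isotopic X f h"
  shows "isotopic X h f"
proof -
  let ?P = "prod_topology (top_of_set {0..1::real}) X"
  obtain H where H: "continuous_map ?P X H" "\<forall>x\<in>topspace X. H (0, x) = f x \<and> H (1, x) = h x"
    "\<forall>t\<in>{0..1}. homeomorphic_map X X (\<lambda>x. H (t, x))"
    using assms unfolding isotopic_def by blast
  have r: "continuous_map ?P ?P (\<lambda>z. (1 - fst z, snd z))"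
  proof (rule continuous_map_pairedI)
    show "continuous_map ?P (top_of_set {0..1}) (\<lambda>z. 1 - fst z)"
    proof (rule continuous_map_into_subtopology)
      show "continuous_map ?P euclideanreal (\<lambda>z. 1 - fst z)"
        by (intro continuous_intros cm_fst01)
      show "(\<lambda>z. 1 - fst z) \<in> topspace ?P \<rightarrow> {0..1}" by auto
    qed
  qed (rule continuous_map_snd)
  show ?thesis unfolding isotopic_def
  proof (intro exI[of _ "\<lambda>z. H (1 - fst z, snd z)"] conjI ballI)
    show "continuous_map ?P X (\<lambda>z. H (1 - fst z, snd z))"
      using continuous_map_compose[OF r H(1)] by (simp add: o_def)
    fix t :: real assume "t \<in> {0..1}"
    then have "1 - t \<in> {0..1}" by auto
    then show "homeomorphic_map X X (\<lambda>x. H (1 - fst (t, x), snd (t, x)))" using H(3) by simp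
  qed (use H(2) in auto)
qed

lemma iso_trans:
  assumes "isotopic X f h" "isotopic X h l"
  shows "isotopic X f l"
proof -
  let ?P = "prod_topology (top_of_set {0..1::real}) X"
  obtain H where H: "continuous_map ?P X H" "\<forall>x\<in>topspace X. H (0, x) = f x \<and> H (1, x) = h x"
    "\<forall>t\<in>{0..1}. homeomorphic_map X X (\<lambda>x. H (t, x))"
    using assms(1) unfolding isotopic_def by blast
  obtain K where K: "continuous_map ?P X K" "\<forall>x\<in>topspace X. K (0, x) = h x \<and> K (1, x) = l x"
    "\<forall>t\<in>{0..1}. homeomorphic_map X X (\<lambda>x. K (t, x))"
    using assms(2) unfolding isotopic_def by blast
  define L where "L = (\<lambda>z. if fst z \<le> 1/2 then H (2 * fst z, snd z) else K (2 * fst z - 1, snd z))"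
  have "continuous_map ?P X L" unfolding L_def
  proof (rule continuous_map_cases_le)
    show "continuous_map ?P euclideanreal fst" by (rule cm_fst01)
    show "continuous_map ?P euclideanreal (\<lambda>x. 1/2)" by simp
    let ?S1 = "subtopology ?P {x \<in> topspace ?P. fst x \<le> 1/2}"
    have r1: "continuous_map ?S1 ?P (\<lambda>z. (2 * fst z, snd z))"
    proof (rule continuous_map_pairedI)
      show "continuous_map ?S1 (top_of_set {0..1}) (\<lambda>z. 2 * fst z)"
      proof (rule continuous_map_into_subtopology)
        show "continuous_map ?S1 euclideanreal (\<lambda>z. 2 * fst z)"
          by (intro continuous_intros continuous_map_from_subtopology cm_fst01)
        show "(\<lambda>z. 2 * fst z) \<in> topspace ?S1 \<rightarrow> {0..1}" by auto
      qed
      show "continuous_map ?S1 X snd" by (rule continuous_map_from_subtopology[OF continuous_map_snd])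
    qed
    show "continuous_map ?S1 X (\<lambda>z. H (2 * fst z, snd z))"
      using continuous_map_compose[OF r1 H(1)] by (simp add: o_def)
    let ?S2 = "subtopology ?P {x \<in> topspace ?P. 1/2 \<le> fst x}"
    have r2: "continuous_map ?S2 ?P (\<lambda>z. (2 * fst z - 1, snd z))"
    proof (rule continuous_map_pairedI)
      show "continuous_map ?S2 (top_of_set {0..1}) (\<lambda>z. 2 * fst z - 1)"
      proof (rule continuous_map_into_subtopology)
        show "continuous_map ?S2 euclideanreal (\<lambda>z. 2 * fst z - 1)"
          by (intro continuous_intros continuous_map_from_subtopology cm_fst01)
        show "(\<lambda>z. 2 * fst z - 1) \<in> topspace ?S2 \<rightarrow> {0..1}" by auto
      qed
      show "continuous_map ?S2 X snd" by (rule continuous_map_from_subtopology[OF continuous_map_snd])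
    qed
    show "continuous_map ?S2 X (\<lambda>z. K (2 * fst z - 1, snd z))"
      using continuous_map_compose[OF r2 K(1)] by (simp add: o_def)
    show "H (2 * fst z, snd z) = K (2 * fst z - 1, snd z)" if "z \<in> topspace ?P" "fst z = 1/2" for z
    proof -
      have "snd z \<in> topspace X" using that(1) by (auto simp: topspace_prod_topology)
      moreover have "2 * fst z = 1" using that(2) by simp
      ultimately show ?thesis using H(2) K(2) by simp
    qed
  qed
  then show ?thesis unfolding isotopic_def
  proof (intro exI[of _ L] conjI ballI)
    fix t :: real assume t: "t \<in> {0..1}"
    show "homeomorphic_map X X (\<lambda>x. L (t, x))"
    proof (cases "t \<le> 1/2")
      case True
      then have "2 * t \<in> {0..1}" using t by auto
      then show ?thesis using H(3) True by (simp add: L_def)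
    next
      case False
      then have "2 * t - 1 \<in> {0..1}" using t by auto
      then show ?thesis using K(3) False by (simp add: L_def)
    qed
  qed (use H(2) K(2) in \<open>auto simp: L_def\<close>)
qed

lemma iso_comp:
  assumes "isotopic X f f'" "isotopic X g g'"
  shows "isotopic X (compose (topspace X) f g) (compose (topspace X) f' g')"
proof -
  let ?P = "prod_topology (top_of_set {0..1::real}) X"
  obtain H where H: "continuous_map ?P X H" "\<forall>x\<in>topspace X. H (0, x) = f x \<and> H (1, x) = f' x"
    "\<forall>t\<in>{0..1}. homeomorphic_map X X (\<lambda>x. H (t, x))"
    using assms(1) unfolding isotopic_def by blast
  obtain K where K: "continuous_map ?P X K" "\<forall>x\<in>topspace X. K (0, x) = g x \<and> K (1, x) = g' x"
    "\<forall>t\<in>{0..1}. homeomorphic_map X X (\<lambda>x. K (t, x))"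
    using assms(2) unfolding isotopic_def by blast
  have r: "continuous_map ?P ?P (\<lambda>z. (fst z, K z))"
    by (rule continuous_map_pairedI[OF continuous_map_fst K(1)])
  have KX: "K z \<in> topspace X" if "z \<in> topspace ?P" for z
    using K(1) that continuous_map_image_subset_topspace by blast
  show ?thesis unfolding isotopic_def
  proof (intro exI[of _ "\<lambda>z. H (fst z, K z)"] conjI ballI)
    show "continuous_map ?P X (\<lambda>z. H (fst z, K z))"
      using continuous_map_compose[OF r H(1)] by (simp add: o_def)
    fix t :: real assume t: "t \<in> {0..1}"
    have "homeomorphic_map X X ((\<lambda>x. H (t, x)) \<circ> (\<lambda>x. K (t, x)))"
      using homeomorphic_map_compose[OF K(3)[rule_format, OF t] H(3)[rule_format, OF t]] .
    then show "homeomorphic_map X X (\<lambda>x. H (fst (t, x), K (t, x)))" by (simp add: o_def)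
  next
    fix x assume x: "x \<in> topspace X"
    have z0: "(0::real, x) \<in> topspace ?P" and z1: "(1::real, x) \<in> topspace ?P" using x by (auto simp: topspace_prod_topology)
    show "H (fst (0, x), K (0, x)) = compose (topspace X) f g x"
      using H(2) K(2) KX[OF z0] x by (simp add: compose_def)
    show "H (fst (1, x), K (1, x)) = compose (topspace X) f' g' x"
      using H(2) K(2) KX[OF z1] x by (simp add: compose_def)
  qed
qed

lemma hom_induced_inverse_p:
  assumes fc: "continuous_map X X f" and hc: "continuous_map X X h" and fh: "\<forall>x\<in>topspace X. f (h x) = x"
    and c: "c \<in> carrier (homology_group p X)"
  shows "hom_induced p X {} X {} f (hom_induced p X {} X {} h c) = c"
proof -
  have "hom_induced p X {} X {} (f \<circ> h) = hom_induced p X {} X {} f \<circ> hom_induced p X {} X {} h"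
    by (rule hom_induced_compose[OF hc _ fc]) auto
  moreover have "hom_induced p X {} X {} (f \<circ> h) c = c"
    by (rule hom_induced_id_gen) (use continuous_map_compose[OF hc fc] fh c in auto)
  ultimately show ?thesis by (simp add: o_def)
qed

lemma hom_induced_cmp:
  assumes fc: "continuous_map X X f" and gc: "continuous_map X X g"
  shows "hom_induced p X {} X {} (compose (topspace X) f g) c = hom_induced p X {} X {} f (hom_induced p X {} X {} g c)"
proof -
  have "hom_induced p X {} X {} (compose (topspace X) f g) = hom_induced p X {} X {} (f \<circ> g)"
    by (rule hom_induced_eq) (simp add: compose_def)
  also have "\<dots> = hom_induced p X {} X {} f \<circ> hom_induced p X {} X {} g"
    by (rule hom_induced_compose[OF gc _ fc]) auto
  finally show ?thesis by simp
qed

lemma op_def': "f \<in> orient_pres_homeos X \<longleftrightarrow> homeomorphic_map X X f \<and> f \<in> extensional (topspace X) \<and>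
      (\<forall>c \<in> carrier (homology_group 2 X). hom_induced 2 X {} X {} f c = c)"
  by (simp add: orient_pres_homeos_def)

lemma op_cont: "f \<in> orient_pres_homeos X \<Longrightarrow> continuous_map X X f"
  by (simp add: op_def' homeomorphic_imp_continuous_map)

lemma op_in: "f \<in> orient_pres_homeos X \<Longrightarrow> x \<in> topspace X \<Longrightarrow> f x \<in> topspace X"
  using op_cont continuous_map_image_subset_topspace by blast

lemma op_cmp:
  assumes f: "f \<in> orient_pres_homeos X" and g: "g \<in> orient_pres_homeos X"
  shows "compose (topspace X) f g \<in> orient_pres_homeos X"
  unfolding op_def'
proof (intro conjI ballI)
  have "homeomorphic_map X X f" "homeomorphic_map X X g" using f g by (simp_all add: op_def')
  then have "homeomorphic_map X X (f \<circ> g)" using homeomorphic_map_compose by blast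
  then show "homeomorphic_map X X (compose (topspace X) f g)"
    by (rule homeomorphic_map_eq) (simp add: compose_def)
  show "compose (topspace X) f g \<in> extensional (topspace X)" by (rule compose_extensional)
  fix c assume c: "c \<in> carrier (homology_group 2 X)"
  have gc: "hom_induced 2 X {} X {} g c = c" using g c by (simp add: op_def')
  show "hom_induced 2 X {} X {} (compose (topspace X) f g) c = c"
    unfolding hom_induced_cmp[OF op_cont[OF f] op_cont[OF g]] gc using f c by (simp add: op_def')
qed

lemma op_id: "restrict id (topspace X) \<in> orient_pres_homeos X"
  unfolding op_def'
proof (intro conjI ballI)
  show "homeomorphic_map X X (restrict id (topspace X))"
  proof (rule homeomorphic_map_eq)
    show "homeomorphic_map X X id" by (simp add: homeomorphic_map_id)
  qed simp
  show "restrict id (topspace X) \<in> extensional (topspace X)" by simp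
  fix c assume c: "c \<in> carrier (homology_group 2 X)"
  show "hom_induced 2 X {} X {} (restrict id (topspace X)) c = c"
    by (rule hom_induced_id_gen) (use c in \<open>auto intro: continuous_map_eq[OF continuous_map_id]\<close>)
qed

lemma op_inv:
  assumes f: "f \<in> orient_pres_homeos X"
  obtains h where "restrict h (topspace X) \<in> orient_pres_homeos X"
    "\<forall>x\<in>topspace X. h (f x) = x" "\<forall>x\<in>topspace X. f (h x) = x" "continuous_map X X h"
proof -
  have "homeomorphic_map X X f" using f by (simp add: op_def')
  then obtain h where fh: "homeomorphic_maps X X f h" unfolding homeomorphic_map_maps by blast
  then have hc: "continuous_map X X h" and hf: "\<forall>x\<in>topspace X. h (f x) = x" and fh': "\<forall>x\<in>topspace X. f (h x) = x"
    unfolding homeomorphic_maps_def by auto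
  have hh: "homeomorphic_map X X h" using fh homeomorphic_maps_map by blast
  have "restrict h (topspace X) \<in> orient_pres_homeos X"
    unfolding op_def'
  proof (intro conjI ballI)
    show "homeomorphic_map X X (restrict h (topspace X))" by (rule homeomorphic_map_eq[OF hh]) simp
    show "restrict h (topspace X) \<in> extensional (topspace X)" by simp
    fix c assume c: "c \<in> carrier (homology_group 2 X)"
    have e: "hom_induced 2 X {} X {} (restrict h (topspace X)) = hom_induced 2 X {} X {} h"
      by (rule hom_induced_eq) simp
    have hcc: "hom_induced 2 X {} X {} h c \<in> carrier (homology_group 2 X)" by (rule hom_induced_carrier)
    have "hom_induced 2 X {} X {} f (hom_induced 2 X {} X {} h c) = c"
      by (rule hom_induced_inverse_p[OF op_cont[OF f] hc fh' c])
    moreover have "hom_induced 2 X {} X {} f (hom_induced 2 X {} X {} h c) = hom_induced 2 X {} X {} h c"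
      using f hcc by (simp add: op_def')
    ultimately show "hom_induced 2 X {} X {} (restrict h (topspace X)) c = c" unfolding e by simp
  qed
  then show ?thesis using that hf fh' hc by blast
qed

lemma iso_op_refl: "f \<in> orient_pres_homeos X \<Longrightarrow> isotopic X f f"
  by (rule iso_refl) (auto simp: op_def')

lemma mc_self: "f \<in> orient_pres_homeos X \<Longrightarrow> f \<in> mclass X f"
  by (simp add: mclass_def iso_op_refl)

lemma mc_eq:
  assumes "isotopic X f f'"
  shows "mclass X f = mclass X f'"
  unfolding mclass_def using assms iso_sym iso_trans by blast

lemma mc_mem: "h \<in> mclass X f \<Longrightarrow> mclass X h = mclass X f"
  unfolding mclass_def using mc_eq[of X f h] iso_sym by (simp add: mclass_def)

lemma mc_iff: "h \<in> mclass X f \<longleftrightarrow> h \<in> orient_pres_homeos X \<and> isotopic X f h"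
  by (simp add: mclass_def)

lemma carrier_MCG: "carrier (MCG X) = mclass X ` orient_pres_homeos X"
  by (simp add: MCG_def)

lemma mult_MCG: "A \<otimes>\<^bsub>MCG X\<^esub> B = mclass X (compose (topspace X) (SOME f. f \<in> A) (SOME h. h \<in> B))"
  by (simp add: MCG_def)

lemma one_MCG: "\<one>\<^bsub>MCG X\<^esub> = mclass X (restrict id (topspace X))"
  by (simp add: MCG_def)

lemma mc_some:
  assumes "f \<in> orient_pres_homeos X"
  shows "(SOME h. h \<in> mclass X f) \<in> mclass X f"
  by (rule someI[of "\<lambda>h. h \<in> mclass X f" f]) (rule mc_self[OF assms])

lemma mult_mc:
  assumes f: "f \<in> orient_pres_homeos X" and g: "g \<in> orient_pres_homeos X"
  shows "mclass X f \<otimes>\<^bsub>MCG X\<^esub> mclass X g = mclass X (compose (topspace X) f g)"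
proof -
  have "isotopic X f (SOME h. h \<in> mclass X f)" using mc_some[OF f] by (simp add: mc_iff)
  moreover have "isotopic X g (SOME h. h \<in> mclass X g)" using mc_some[OF g] by (simp add: mc_iff)
  ultimately have "isotopic X (compose (topspace X) f g) (compose (topspace X) (SOME h. h \<in> mclass X f) (SOME h. h \<in> mclass X g))"
    by (rule iso_comp)
  then show ?thesis unfolding mult_MCG by (rule mc_eq[symmetric])
qed

lemma cmp_assoc:
  assumes "h \<in> orient_pres_homeos X"
  shows "compose (topspace X) (compose (topspace X) f g) h = compose (topspace X) f (compose (topspace X) g h)"
  using op_in[OF assms] by (auto simp: compose_def)

lemma cmp_id:
  assumes "f \<in> orient_pres_homeos X"
  shows "compose (topspace X) (restrict id (topspace X)) f = f"
proof
  fix x show "compose (topspace X) (restrict id (topspace X)) f x = f x"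
    using op_in[OF assms] assms by (auto simp: compose_def op_def' extensional_def)
qed

lemma group_MCG: "group (MCG X)"
proof (rule groupI)
  fix A B assume "A \<in> carrier (MCG X)" "B \<in> carrier (MCG X)"
  then obtain f g where fg: "f \<in> orient_pres_homeos X" "g \<in> orient_pres_homeos X" "A = mclass X f" "B = mclass X g"
    by (auto simp: carrier_MCG)
  show "A \<otimes>\<^bsub>MCG X\<^esub> B \<in> carrier (MCG X)"
    unfolding fg(3,4) mult_mc[OF fg(1,2)] carrier_MCG using op_cmp[OF fg(1,2)] by blast
next
  show "\<one>\<^bsub>MCG X\<^esub> \<in> carrier (MCG X)" unfolding one_MCG carrier_MCG using op_id by blast
next
  fix A B C assume "A \<in> carrier (MCG X)" "B \<in> carrier (MCG X)" "C \<in> carrier (MCG X)"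
  then obtain f g h where fg: "f \<in> orient_pres_homeos X" "g \<in> orient_pres_homeos X" "h \<in> orient_pres_homeos X"
    "A = mclass X f" "B = mclass X g" "C = mclass X h"
    by (auto simp: carrier_MCG)
  show "A \<otimes>\<^bsub>MCG X\<^esub> B \<otimes>\<^bsub>MCG X\<^esub> C = A \<otimes>\<^bsub>MCG X\<^esub> (B \<otimes>\<^bsub>MCG X\<^esub> C)"
    unfolding fg(4,5,6) mult_mc[OF fg(1,2)] mult_mc[OF fg(2,3)] mult_mc[OF op_cmp[OF fg(1,2)] fg(3)]
      mult_mc[OF fg(1) op_cmp[OF fg(2,3)]] cmp_assoc[OF fg(3)] ..
next
  fix A assume "A \<in> carrier (MCG X)"
  then obtain f where f: "f \<in> orient_pres_homeos X" "A = mclass X f" by (auto simp: carrier_MCG)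
  show "\<one>\<^bsub>MCG X\<^esub> \<otimes>\<^bsub>MCG X\<^esub> A = A"
    unfolding f(2) one_MCG mult_mc[OF op_id f(1)] cmp_id[OF f(1)] ..
next
  fix A assume "A \<in> carrier (MCG X)"
  then obtain f where f: "f \<in> orient_pres_homeos X" "A = mclass X f" by (auto simp: carrier_MCG)
  obtain h where h: "restrict h (topspace X) \<in> orient_pres_homeos X"
    "\<forall>x\<in>topspace X. h (f x) = x" "\<forall>x\<in>topspace X. f (h x) = x" "continuous_map X X h"
    by (rule op_inv[OF f(1)])
  have "compose (topspace X) (restrict h (topspace X)) f = restrict id (topspace X)"
    using h(2) op_in[OF f(1)] by (auto simp: compose_def)
  then have "mclass X (restrict h (topspace X)) \<otimes>\<^bsub>MCG X\<^esub> A = \<one>\<^bsub>MCG X\<^esub>"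
    unfolding f(2) one_MCG mult_mc[OF h(1) f(1)] by simp
  moreover have "mclass X (restrict h (topspace X)) \<in> carrier (MCG X)" using h(1) by (simp add: carrier_MCG)
  ultimately show "\<exists>B\<in>carrier (MCG X). B \<otimes>\<^bsub>MCG X\<^esub> A = \<one>\<^bsub>MCG X\<^esub>" by blast
qed

lemma inv_MCG:
  assumes f: "f \<in> orient_pres_homeos X" and h: "restrict h (topspace X) \<in> orient_pres_homeos X"
    and hf: "\<forall>x\<in>topspace X. h (f x) = x"
  shows "inv\<^bsub>MCG X\<^esub> (mclass X f) = mclass X (restrict h (topspace X))"
proof (rule group.inv_equality[OF group_MCG])
  have "compose (topspace X) (restrict h (topspace X)) f = restrict id (topspace X)"
    using hf op_in[OF f] by (auto simp: compose_def)
  then show "mclass X (restrict h (topspace X)) \<otimes>\<^bsub>MCG X\<^esub> mclass X f = \<one>\<^bsub>MCG X\<^esub>"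
    unfolding one_MCG mult_mc[OF h f] by simp
qed (use f h in \<open>auto simp: carrier_MCG\<close>)

lemma hom_ind_mp:
  assumes c: "c \<in> carrier (homology_group 1 X)" and d: "d \<in> carrier (homology_group 1 X)"
  shows "hom_induced 1 X {} X {} u (c \<otimes>\<^bsub>homology_group 1 X\<^esub> d [^]\<^bsub>homology_group 1 X\<^esub> (k::nat))
     = hom_induced 1 X {} X {} u c \<otimes>\<^bsub>homology_group 1 X\<^esub> (hom_induced 1 X {} X {} u d) [^]\<^bsub>homology_group 1 X\<^esub> k"
proof -
  interpret H: comm_group "homology_group 1 X" by (rule abelian_homology_group)
  have hh: "hom_induced 1 X {} X {} u \<in> hom (homology_group 1 X) (homology_group 1 X)" by (rule hom_induced_empty_hom)
  show ?thesis using hom_mult[OF hh c H.nat_pow_closed[OF d]] hom_nat_pow[OF hh d H.is_group H.is_group] by simp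
qed

lemma acts_id: "acts_trivially_mod X k (restrict id (topspace X))"
proof -
  interpret H: comm_group "homology_group 1 X" by (rule abelian_homology_group)
  show ?thesis unfolding acts_trivially_mod_def
  proof (intro ballI bexI)
    fix c assume c: "c \<in> carrier (homology_group 1 X)"
    have "hom_induced 1 X {} X {} (restrict id (topspace X)) c = c"
      by (rule hom_induced_id_gen) (use c in \<open>auto intro: continuous_map_eq[OF continuous_map_id]\<close>)
    then show "hom_induced 1 X {} X {} (restrict id (topspace X)) c = c \<otimes>\<^bsub>homology_group 1 X\<^esub> \<one>\<^bsub>homology_group 1 X\<^esub> [^]\<^bsub>homology_group 1 X\<^esub> k"
      using c by simp
  qed simp
qed

lemma acts_cmp:
  assumes f: "acts_trivially_mod X k f" "continuous_map X X f" and g: "acts_trivially_mod X k g" "continuous_map X X g"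
  shows "acts_trivially_mod X k (compose (topspace X) f g)"
  unfolding acts_trivially_mod_def
proof (intro ballI)
  interpret H: comm_group "homology_group 1 X" by (rule abelian_homology_group)
  fix c assume c: "c \<in> carrier (homology_group 1 X)"
  obtain d where d: "d \<in> carrier (homology_group 1 X)" "hom_induced 1 X {} X {} g c = c \<otimes>\<^bsub>homology_group 1 X\<^esub> d [^]\<^bsub>homology_group 1 X\<^esub> k"
    using g(1) c unfolding acts_trivially_mod_def by blast
  obtain e where e: "e \<in> carrier (homology_group 1 X)" "hom_induced 1 X {} X {} f c = c \<otimes>\<^bsub>homology_group 1 X\<^esub> e [^]\<^bsub>homology_group 1 X\<^esub> k"
    using f(1) c unfolding acts_trivially_mod_def by blast
  let ?fd = "hom_induced 1 X {} X {} f d"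
  have fd: "?fd \<in> carrier (homology_group 1 X)" by (rule hom_induced_carrier)
  have "hom_induced 1 X {} X {} (compose (topspace X) f g) c = hom_induced 1 X {} X {} f (c \<otimes>\<^bsub>homology_group 1 X\<^esub> d [^]\<^bsub>homology_group 1 X\<^esub> k)"
    by (simp add: hom_induced_cmp[OF f(2) g(2)] d(2))
  also have "\<dots> = c \<otimes>\<^bsub>homology_group 1 X\<^esub> e [^]\<^bsub>homology_group 1 X\<^esub> k \<otimes>\<^bsub>homology_group 1 X\<^esub> ?fd [^]\<^bsub>homology_group 1 X\<^esub> k"
    by (simp add: hom_ind_mp[OF c d(1)] e(2))
  also have "\<dots> = c \<otimes>\<^bsub>homology_group 1 X\<^esub> (e \<otimes>\<^bsub>homology_group 1 X\<^esub> ?fd) [^]\<^bsub>homology_group 1 X\<^esub> k"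
    using c e(1) fd by (simp add: H.nat_pow_distrib H.m_assoc)
  finally show "\<exists>d\<in>carrier (homology_group 1 X). hom_induced 1 X {} X {} (compose (topspace X) f g) c = c \<otimes>\<^bsub>homology_group 1 X\<^esub> d [^]\<^bsub>homology_group 1 X\<^esub> k"
    using e(1) fd by blast
qed

lemma acts_inv:
  assumes f: "acts_trivially_mod X k f" "continuous_map X X f" and h: "continuous_map X X h"
    and fh: "\<forall>x\<in>topspace X. f (h x) = x"
  shows "acts_trivially_mod X k (restrict h (topspace X))"
  unfolding acts_trivially_mod_def
proof (intro ballI)
  interpret H: comm_group "homology_group 1 X" by (rule abelian_homology_group)
  fix c assume c: "c \<in> carrier (homology_group 1 X)"
  have e: "hom_induced 1 X {} X {} (restrict h (topspace X)) = hom_induced 1 X {} X {} h"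
    by (rule hom_induced_eq) simp
  have hc_c: "hom_induced 1 X {} X {} h c \<in> carrier (homology_group 1 X)" by (rule hom_induced_carrier)
  obtain d where d: "d \<in> carrier (homology_group 1 X)"
     "hom_induced 1 X {} X {} f (hom_induced 1 X {} X {} h c) = hom_induced 1 X {} X {} h c \<otimes>\<^bsub>homology_group 1 X\<^esub> (d [^]\<^bsub>homology_group 1 X\<^esub> k)"
    using f(1) hc_c unfolding acts_trivially_mod_def by blast
  have "c = hom_induced 1 X {} X {} h c \<otimes>\<^bsub>homology_group 1 X\<^esub> (d [^]\<^bsub>homology_group 1 X\<^esub> k)"
    using d(2) hom_induced_inverse[OF f(2) h fh c] by simp
  then have "c \<otimes>\<^bsub>homology_group 1 X\<^esub> inv\<^bsub>homology_group 1 X\<^esub> (d [^]\<^bsub>homology_group 1 X\<^esub> k) =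
     (hom_induced 1 X {} X {} h c \<otimes>\<^bsub>homology_group 1 X\<^esub> (d [^]\<^bsub>homology_group 1 X\<^esub> k)) \<otimes>\<^bsub>homology_group 1 X\<^esub> inv\<^bsub>homology_group 1 X\<^esub> (d [^]\<^bsub>homology_group 1 X\<^esub> k)"
    by (rule arg_cong[where f="\<lambda>z. z \<otimes>\<^bsub>homology_group 1 X\<^esub> inv\<^bsub>homology_group 1 X\<^esub> (d [^]\<^bsub>homology_group 1 X\<^esub> k)"])
  also have "\<dots> = hom_induced 1 X {} X {} h c"
    using hc_c d(1) by (simp add: H.m_assoc)
  finally have "hom_induced 1 X {} X {} (restrict h (topspace X)) c = c \<otimes>\<^bsub>homology_group 1 X\<^esub> (inv\<^bsub>homology_group 1 X\<^esub> d) [^]\<^bsub>homology_group 1 X\<^esub> k"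
    unfolding e using d(1) by (simp add: H.nat_pow_inv)
  then show "\<exists>d\<in>carrier (homology_group 1 X). hom_induced 1 X {} X {} (restrict h (topspace X)) c = c \<otimes>\<^bsub>homology_group 1 X\<^esub> d [^]\<^bsub>homology_group 1 X\<^esub> k"
    using d(1) by blast
qed

lemma acts_conj:
  assumes f: "acts_trivially_mod X k f" "continuous_map X X f" and u: "continuous_map X X u" "continuous_map X X v"
    and uv: "\<forall>x\<in>topspace X. u (v x) = x"
  shows "acts_trivially_mod X k (compose (topspace X) (compose (topspace X) u f) v)"
  unfolding acts_trivially_mod_def
proof (intro ballI)
  interpret H: comm_group "homology_group 1 X" by (rule abelian_homology_group)
  fix c assume c: "c \<in> carrier (homology_group 1 X)"
  have uf: "continuous_map X X (compose (topspace X) u f)"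
    by (rule continuous_map_eq[OF continuous_map_compose[OF f(2) u(1)]]) (simp add: compose_def)
  have vc: "hom_induced 1 X {} X {} v c \<in> carrier (homology_group 1 X)" by (rule hom_induced_carrier)
  obtain d where d: "d \<in> carrier (homology_group 1 X)"
     "hom_induced 1 X {} X {} f (hom_induced 1 X {} X {} v c) = hom_induced 1 X {} X {} v c \<otimes>\<^bsub>homology_group 1 X\<^esub> (d [^]\<^bsub>homology_group 1 X\<^esub> k)"
    using f(1) vc unfolding acts_trivially_mod_def by blast
  have "hom_induced 1 X {} X {} (compose (topspace X) (compose (topspace X) u f) v) c
      = hom_induced 1 X {} X {} u (hom_induced 1 X {} X {} v c \<otimes>\<^bsub>homology_group 1 X\<^esub> (d [^]\<^bsub>homology_group 1 X\<^esub> k))"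
    by (simp add: hom_induced_cmp[OF uf u(2)] hom_induced_cmp[OF u(1) f(2)] d(2))
  also have "\<dots> = c \<otimes>\<^bsub>homology_group 1 X\<^esub> (hom_induced 1 X {} X {} u d) [^]\<^bsub>homology_group 1 X\<^esub> k"
    by (simp add: hom_ind_mp[OF vc d(1)] hom_induced_inverse[OF u(1) u(2) uv c])
  finally show "\<exists>d\<in>carrier (homology_group 1 X). hom_induced 1 X {} X {} (compose (topspace X) (compose (topspace X) u f) v) c = c \<otimes>\<^bsub>homology_group 1 X\<^esub> d [^]\<^bsub>homology_group 1 X\<^esub> k"
    using hom_induced_carrier by blast
qed

lemma class_rep:
  assumes "C \<in> carrier (MCG X)" "f \<in> C"
  shows "f \<in> orient_pres_homeos X" "C = mclass X f"
proof -
  obtain c0 where c0: "c0 \<in> orient_pres_homeos X" "C = mclass X c0" using assms(1) by (auto simp: carrier_MCG)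
  show "f \<in> orient_pres_homeos X" using assms(2) c0(2) by (simp add: mc_iff)
  show "C = mclass X f" using mc_mem[of f X c0] assms(2) c0(2) by simp
qed

lemma mc_carrier: "f \<in> orient_pres_homeos X \<Longrightarrow> mclass X f \<in> carrier (MCG X)"
  by (simp add: carrier_MCG)

lemma LMod_subgroup:
  assumes cov: "covering_map Y X p"
  shows "subgroup (LMod Y X p) (MCG X)"
proof (rule group.subgroupI[OF group_MCG])
  show "LMod Y X p \<subseteq> carrier (MCG X)" by (auto simp: LMod_def)
  have "lifts_to_homeo Y X p (restrict id (topspace X))"
    unfolding lifts_to_homeo_def
    by (intro exI[of _ id]) (simp add: homeomorphic_map_id cov_map_in[OF cov])
  then have "\<one>\<^bsub>MCG X\<^esub> \<in> LMod Y X p"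
    unfolding LMod_def one_MCG using mc_carrier[OF op_id] mc_self[OF op_id] by blast
  then show "LMod Y X p \<noteq> {}" by blast
next
  fix C assume "C \<in> LMod Y X p"
  then obtain f where C: "C \<in> carrier (MCG X)" "f \<in> C" "lifts_to_homeo Y X p f" by (auto simp: LMod_def)
  have f: "f \<in> orient_pres_homeos X" "C = mclass X f" using class_rep[OF C(1,2)] by auto
  obtain h where h: "homeomorphic_map Y Y h" "\<forall>y\<in>topspace Y. p (h y) = f (p y)" using C(3) by (auto simp: lifts_to_homeo_def)
  obtain hi where hi: "homeomorphic_maps Y Y h hi" using h(1) homeomorphic_map_maps by blast
  have hi1: "homeomorphic_map Y Y hi" using hi homeomorphic_maps_map by blast
  have hi2: "\<forall>y\<in>topspace Y. h (hi y) = y \<and> hi y \<in> topspace Y"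
    using hi unfolding homeomorphic_maps_def using continuous_map_image_subset_topspace by blast
  obtain fi where fi: "restrict fi (topspace X) \<in> orient_pres_homeos X"
    "\<forall>x\<in>topspace X. fi (f x) = x" "\<forall>x\<in>topspace X. f (fi x) = x" "continuous_map X X fi"
    by (rule op_inv[OF f(1)])
  have inv: "inv\<^bsub>MCG X\<^esub> C = mclass X (restrict fi (topspace X))" unfolding f(2) by (rule inv_MCG[OF f(1) fi(1,2)])
  have "lifts_to_homeo Y X p (restrict fi (topspace X))"
    unfolding lifts_to_homeo_def
  proof (intro exI[of _ hi] conjI ballI)
    show "homeomorphic_map Y Y hi" by (rule hi1)
    fix y assume y: "y \<in> topspace Y"
    have hy: "hi y \<in> topspace Y" using hi2 y by blast
    have eq: "p y = f (p (hi y))" using h(2) hi2 y by metis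
    have py: "p (hi y) \<in> topspace X" using cov_map_in[OF cov hy] .
    have "f (p (hi y)) \<in> topspace X" using op_in[OF f(1) py] .
    then show "p (hi y) = restrict fi (topspace X) (p y)"
      using eq fi(2) py by simp
  qed
  then show "inv\<^bsub>MCG X\<^esub> C \<in> LMod Y X p"
    unfolding inv LMod_def using mc_carrier[OF fi(1)] mc_self[OF fi(1)] by blast
next
  fix C D assume "C \<in> LMod Y X p" "D \<in> LMod Y X p"
  then obtain f f' where C: "C \<in> carrier (MCG X)" "f \<in> C" "lifts_to_homeo Y X p f"
     and D: "D \<in> carrier (MCG X)" "f' \<in> D" "lifts_to_homeo Y X p f'" by (auto simp: LMod_def)
  have f: "f \<in> orient_pres_homeos X" "C = mclass X f" using class_rep[OF C(1,2)] by auto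
  have f': "f' \<in> orient_pres_homeos X" "D = mclass X f'" using class_rep[OF D(1,2)] by auto
  obtain h where h: "homeomorphic_map Y Y h" "\<forall>y\<in>topspace Y. p (h y) = f (p y)" using C(3) by (auto simp: lifts_to_homeo_def)
  obtain h' where h': "homeomorphic_map Y Y h'" "\<forall>y\<in>topspace Y. p (h' y) = f' (p y)" using D(3) by (auto simp: lifts_to_homeo_def)
  have "lifts_to_homeo Y X p (compose (topspace X) f f')"
    unfolding lifts_to_homeo_def
  proof (intro exI[of _ "h \<circ> h'"] conjI ballI)
    show "homeomorphic_map Y Y (h \<circ> h')" by (rule homeomorphic_map_compose[OF h'(1) h(1)])
    fix y assume y: "y \<in> topspace Y"
    have "h' y \<in> topspace Y" using h'(1) y homeomorphic_imp_continuous_map continuous_map_image_subset_topspace by blast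
    then show "p ((h \<circ> h') y) = compose (topspace X) f f' (p y)"
      using h(2) h'(2) y cov_map_in[OF cov y] by (simp add: compose_def)
  qed
  then show "C \<otimes>\<^bsub>MCG X\<^esub> D \<in> LMod Y X p"
    unfolding f(2) f'(2) mult_mc[OF f(1) f'(1)] LMod_def
    using mc_carrier[OF op_cmp[OF f(1) f'(1)]] mc_self[OF op_cmp[OF f(1) f'(1)]] by blast
qed

lemma level_normal: "level_subgroup X k \<lhd> MCG X"
proof -
  interpret G: group "MCG X" by (rule group_MCG)
  have sub: "subgroup (level_subgroup X k) (MCG X)"
  proof (rule G.subgroupI)
    show "level_subgroup X k \<subseteq> carrier (MCG X)" by (auto simp: level_subgroup_def)
    have "\<one>\<^bsub>MCG X\<^esub> \<in> level_subgroup X k"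
      unfolding level_subgroup_def one_MCG using mc_carrier[OF op_id] mc_self[OF op_id] acts_id by blast
    then show "level_subgroup X k \<noteq> {}" by blast
  next
    fix C assume "C \<in> level_subgroup X k"
    then obtain f where C: "C \<in> carrier (MCG X)" "f \<in> C" "acts_trivially_mod X k f" by (auto simp: level_subgroup_def)
    have f: "f \<in> orient_pres_homeos X" "C = mclass X f" using class_rep[OF C(1,2)] by auto
    obtain fi where fi: "restrict fi (topspace X) \<in> orient_pres_homeos X"
      "\<forall>x\<in>topspace X. fi (f x) = x" "\<forall>x\<in>topspace X. f (fi x) = x" "continuous_map X X fi"
      by (rule op_inv[OF f(1)])
    have inv: "inv\<^bsub>MCG X\<^esub> C = mclass X (restrict fi (topspace X))" unfolding f(2) by (rule inv_MCG[OF f(1) fi(1,2)])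
    have "acts_trivially_mod X k (restrict fi (topspace X))"
      by (rule acts_inv[OF C(3) op_cont[OF f(1)] fi(4,3)])
    then show "inv\<^bsub>MCG X\<^esub> C \<in> level_subgroup X k"
      unfolding inv level_subgroup_def using mc_carrier[OF fi(1)] mc_self[OF fi(1)] by blast
  next
    fix C D assume "C \<in> level_subgroup X k" "D \<in> level_subgroup X k"
    then obtain f f' where C: "C \<in> carrier (MCG X)" "f \<in> C" "acts_trivially_mod X k f"
       and D: "D \<in> carrier (MCG X)" "f' \<in> D" "acts_trivially_mod X k f'" by (auto simp: level_subgroup_def)
    have f: "f \<in> orient_pres_homeos X" "C = mclass X f" using class_rep[OF C(1,2)] by auto
    have f': "f' \<in> orient_pres_homeos X" "D = mclass X f'" using class_rep[OF D(1,2)] by auto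
    have "acts_trivially_mod X k (compose (topspace X) f f')"
      by (rule acts_cmp[OF C(3) op_cont[OF f(1)] D(3) op_cont[OF f'(1)]])
    then show "C \<otimes>\<^bsub>MCG X\<^esub> D \<in> level_subgroup X k"
      unfolding f(2) f'(2) mult_mc[OF f(1) f'(1)] level_subgroup_def
      using mc_carrier[OF op_cmp[OF f(1) f'(1)]] mc_self[OF op_cmp[OF f(1) f'(1)]] by blast
  qed
  show ?thesis unfolding G.normal_inv_iff
  proof (intro conjI ballI)
    show "subgroup (level_subgroup X k) (MCG X)" by (rule sub)
    fix A C assume A: "A \<in> carrier (MCG X)" and "C \<in> level_subgroup X k"
    then obtain f where C: "C \<in> carrier (MCG X)" "f \<in> C" "acts_trivially_mod X k f" by (auto simp: level_subgroup_def)
    have f: "f \<in> orient_pres_homeos X" "C = mclass X f" using class_rep[OF C(1,2)] by auto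
    obtain u where u: "u \<in> orient_pres_homeos X" "A = mclass X u" using A by (auto simp: carrier_MCG)
    obtain ui where ui: "restrict ui (topspace X) \<in> orient_pres_homeos X"
      "\<forall>x\<in>topspace X. ui (u x) = x" "\<forall>x\<in>topspace X. u (ui x) = x" "continuous_map X X ui"
      by (rule op_inv[OF u(1)])
    have inv: "inv\<^bsub>MCG X\<^esub> A = mclass X (restrict ui (topspace X))" unfolding u(2) by (rule inv_MCG[OF u(1) ui(1,2)])
    have conj: "A \<otimes>\<^bsub>MCG X\<^esub> C \<otimes>\<^bsub>MCG X\<^esub> inv\<^bsub>MCG X\<^esub> A = mclass X (compose (topspace X) (compose (topspace X) u f) (restrict ui (topspace X)))"
      unfolding inv unfolding u(2) f(2) mult_mc[OF u(1) f(1)] mult_mc[OF op_cmp[OF u(1) f(1)] ui(1)] ..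
    have op3: "compose (topspace X) (compose (topspace X) u f) (restrict ui (topspace X)) \<in> orient_pres_homeos X"
      by (rule op_cmp[OF op_cmp[OF u(1) f(1)] ui(1)])
    have rc: "continuous_map X X (restrict ui (topspace X))" by (rule continuous_map_eq[OF ui(4)]) simp
    have "acts_trivially_mod X k (compose (topspace X) (compose (topspace X) u f) (restrict ui (topspace X)))"
      by (rule acts_conj[OF C(3) op_cont[OF f(1)] op_cont[OF u(1)] rc]) (use ui(3) in simp)
    then show "A \<otimes>\<^bsub>MCG X\<^esub> C \<otimes>\<^bsub>MCG X\<^esub> inv\<^bsub>MCG X\<^esub> A \<in> level_subgroup X k"
      unfolding conj level_subgroup_def using mc_carrier[OF op3] mc_self[OF op3] by blast
  qed
qed

theorem corollary2p3:
  fixes X :: "'a topology" and Y :: "'b topology" and p :: "'b \<Rightarrow> 'a"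
    and a b :: "nat \<Rightarrow> real \<Rightarrow> 'a" and g k :: nat
  assumes "g \<ge> 1" and "k \<ge> 2"
    and "orientable_closed_surface X"
    and "\<forall>i\<in>{1..g}. simple_closed_curve X (a i) \<and> simple_closed_curve X (b i)"
    and "homology_basis X g a b"
    and "cover_of_ker_phi Y X p g a b k"
  shows "level_subgroup X k \<lhd> (MCG X)\<lparr>carrier := LMod Y X p\<rparr>"
proof -
  have surf: "closed_surface X" using assms(3) by (simp add: orientable_closed_surface_def)
  have ok: "ab_ok X g a b"
    unfolding ab_ok_def using assms(4) by (auto simp: simple_closed_curve_def intro!: loop_class_carrier)
  have cov: "covering_map Y X p" using assms(6) by (simp add: cover_of_ker_phi_def)
  have sub: "level_subgroup X k \<subseteq> LMod Y X p"
  proof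
    fix C assume "C \<in> level_subgroup X k"
    then obtain f where C: "C \<in> carrier (MCG X)" "f \<in> C" "acts_trivially_mod X k f" by (auto simp: level_subgroup_def)
    have f: "f \<in> orient_pres_homeos X" using class_rep[OF C(1,2)] by auto
    then have hf: "homeomorphic_map X X f" by (simp add: op_def')
    have "lifts_to_homeo Y X p f" by (rule acts_lifts[OF assms(6) surf ok assms(1) assms(5) hf C(3)])
    then show "C \<in> LMod Y X p" unfolding LMod_def using C(1,2) by blast
  qed
  show ?thesis
    by (rule group.normal_restrict_supergroup[OF group_MCG LMod_subgroup[OF cov] level_normal sub])
qed

end
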